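(* Assume $c\ge c_0>0$ and $-\operatorname{div} b\ge b_0>0$ a.e. in $\Omega$ for constants $c_0,b_0$, let $(u,p)\in H^1_0\times D$ be the exact solution of problem (P1), and let $\tilde u\in H^1_0$. Then for every $\phi\in D$, $$\|u-\tilde u\|_{-\operatorname{div} b}^2 \le \tfrac12\Big(\|f - c\tilde u - b\cdot\nabla\tilde u + \operatorname{div}\phi\|_{c^{-1}}^2 + \|\phi - A\nabla\tilde u\|_{A^{-1}}^2\Big).$$
   Context: $\Omega \subset \mathbb R^d$ ($d\ge1$) is an arbitrary open domain. All function spaces are over $\mathbb C$. $L^2 = L^2(\Omega)$ (scalar or vector valued) has inner product $(x,y) = \int_\Omega x\cdot\bar y$ and norm $\|\cdot\|$. For a real scalar or Hermitian-matrix valued weight $\gamma \in L^\infty(\Omega)$ with $\gamma\ge 0$, $\|v\|_\gamma^2 := (\gamma v, v)$. $H^1 = \{\varphi\in L^2 : \nabla\varphi\in L^2\}$, $D = \{\psi \in L^2(\Omega;\mathbb C^d) : \operatorname{div}\psi \in L^2\}$, and $H^1_0$ is the closure of $C_c^\infty(\Omega)$ in $H^1$. Coefficients: $A \in L^\infty(\Omega;\mathbb C^{d\times d})$ is pointwise Hermitian and satisfies $\alpha\|\varphi\|^2 \le (A\varphi,\varphi) \le \beta\|\varphi\|^2$ for all $\varphi\in L^2(\Omega;\mathbb C^d)$ with constants $0<\alpha\le\beta$; $b\in L^\infty(\Omega;\mathbb R^d)$ is real with distributional divergence $\operatorname{div} b \in L^\infty(\Omega)$; $c\in L^\infty(\Omega)$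 is real valued; $f\in L^2$. Problem (P1): find $(u,p)\in H^1_0\times D$ with $p = A\nabla u$ and $-\operatorname{div} p + b\cdot\nabla u + c\,u = f$ a.e. in $\Omega$. *)

theory Defs
  imports "HOL-Analysis.Analysis"
begin

text \<open>Points of the domain are vectors in real^'n (d = CARD('n) >= 1).\<close>

definition pderiv :: "'n::finite \<Rightarrow> (real^'n \<Rightarrow> real) \<Rightarrow> real^'n \<Rightarrow> real" where
  "pderiv i f x = frechet_derivative f (at x) (axis i 1)"

fun iter_pderiv :: "'n::finite list \<Rightarrow> (real^'n \<Rightarrow> real) \<Rightarrow> real^'n \<Rightarrow> real" where
  "iter_pderiv [] f = f"
| "iter_pderiv (i # is) f = pderiv i (iter_pderiv is f)"

definition smooth :: "(real^'n::finite \<Rightarrow> real) \<Rightarrow> bool" where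
  "smooth f \<longleftrightarrow> (\<forall>is x. iter_pderiv is f differentiable (at x))"

definition test_fun :: "(real^'n::finite) set \<Rightarrow> (real^'n \<Rightarrow> real) \<Rightarrow> bool" where
  "test_fun \<Omega> \<psi> \<longleftrightarrow> smooth \<psi> \<and> compact (closure {x. \<psi> x \<noteq> 0})
      \<and> closure {x. \<psi> x \<noteq> 0} \<subseteq> \<Omega>"

definition L2 :: "(real^'n::finite) set \<Rightarrow> (real^'n \<Rightarrow> complex) \<Rightarrow> bool" where
  "L2 \<Omega> v \<longleftrightarrow> v \<in> borel_measurable (lebesgue_on \<Omega>)
      \<and> integrable (lebesgue_on \<Omega>) (\<lambda>x. (cmod (v x))\<^sup>2)"

definition L2v :: "(real^'n::finite) set \<Rightarrow> (real^'n \<Rightarrow> complex^'n) \<Rightarrow> bool" where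
  "L2v \<Omega> v \<longleftrightarrow> v \<in> borel_measurable (lebesgue_on \<Omega>)
      \<and> integrable (lebesgue_on \<Omega>) (\<lambda>x. (norm (v x))\<^sup>2)"

definition Linf :: "(real^'n::finite) set \<Rightarrow> (real^'n \<Rightarrow> 'b::{real_normed_vector,second_countable_topology}) \<Rightarrow> bool" where
  "Linf \<Omega> v \<longleftrightarrow> v \<in> borel_measurable (lebesgue_on \<Omega>)
      \<and> (\<exists>M. AE x in lebesgue_on \<Omega>. norm (v x) \<le> M)"

definition cdot :: "complex^'n::finite \<Rightarrow> complex^'n \<Rightarrow> complex" where
  "cdot v w = (\<Sum>i\<in>UNIV. v $ i * cnj (w $ i))"

definition weak_partial :: "(real^'n::finite) set \<Rightarrow> (real^'n \<Rightarrow> complex) \<Rightarrow> 'n \<Rightarrow> (real^'n \<Rightarrow> complex) \<Rightarrow> bool" where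
  "weak_partial \<Omega> u i g \<longleftrightarrow> (\<forall>\<psi>. test_fun \<Omega> \<psi> \<longrightarrow>
      (\<integral>x. u x * complex_of_real (pderiv i \<psi> x) \<partial>lebesgue_on \<Omega>)
        = - (\<integral>x. g x * complex_of_real (\<psi> x) \<partial>lebesgue_on \<Omega>))"

text \<open>H^1(Omega) and the weak gradient (well defined up to null sets).\<close>
definition H1 :: "(real^'n::finite) set \<Rightarrow> (real^'n \<Rightarrow> complex) \<Rightarrow> bool" where
  "H1 \<Omega> u \<longleftrightarrow> L2 \<Omega> u \<and> (\<forall>i. \<exists>g. L2 \<Omega> g \<and> weak_partial \<Omega> u i g)"

definition wgrad :: "(real^'n::finite) set \<Rightarrow> (real^'n \<Rightarrow> complex) \<Rightarrow> real^'n \<Rightarrow> complex^'n" where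
  "wgrad \<Omega> u x = (\<chi> i. (SOME g. L2 \<Omega> g \<and> weak_partial \<Omega> u i g) x)"

text \<open>H^1_0(Omega): closure of (complex) C_c^infinity(Omega) in the H^1 norm.
  A complex test function is psi1 + i psi2 with real test functions psi1, psi2.\<close>
definition H10 :: "(real^'n::finite) set \<Rightarrow> (real^'n \<Rightarrow> complex) \<Rightarrow> bool" where
  "H10 \<Omega> u \<longleftrightarrow> H1 \<Omega> u \<and>
     (\<exists>\<psi>1 \<psi>2 :: nat \<Rightarrow> real^'n \<Rightarrow> real. (\<forall>k. test_fun \<Omega> (\<psi>1 k) \<and> test_fun \<Omega> (\<psi>2 k)) \<and>
       (\<lambda>k. (\<integral>x. (cmod (complex_of_real (\<psi>1 k x) + \<i> * complex_of_real (\<psi>2 k x) - u x))\<^sup>2 \<partial>lebesgue_on \<Omega>)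
          + (\<Sum>i\<in>UNIV. \<integral>x. (cmod (complex_of_real (pderiv i (\<psi>1 k) x)
                 + \<i> * complex_of_real (pderiv i (\<psi>2 k) x) - wgrad \<Omega> u x $ i))\<^sup>2 \<partial>lebesgue_on \<Omega>))
       \<longlonglongrightarrow> 0)"

definition weak_div :: "(real^'n::finite) set \<Rightarrow> (real^'n \<Rightarrow> complex^'n) \<Rightarrow> (real^'n \<Rightarrow> complex) \<Rightarrow> bool" where
  "weak_div \<Omega> q w \<longleftrightarrow> (\<forall>\<psi>. test_fun \<Omega> \<psi> \<longrightarrow>
      (\<integral>x. (\<Sum>i\<in>UNIV. q x $ i * complex_of_real (pderiv i \<psi> x)) \<partial>lebesgue_on \<Omega>)
        = - (\<integral>x. w x * complex_of_real (\<psi> x) \<partial>lebesgue_on \<Omega>))"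

text \<open>The space D = H(div) and the weak divergence.\<close>
definition Hdiv :: "(real^'n::finite) set \<Rightarrow> (real^'n \<Rightarrow> complex^'n) \<Rightarrow> bool" where
  "Hdiv \<Omega> q \<longleftrightarrow> L2v \<Omega> q \<and> (\<exists>w. L2 \<Omega> w \<and> weak_div \<Omega> q w)"

definition wdiv :: "(real^'n::finite) set \<Rightarrow> (real^'n \<Rightarrow> complex^'n) \<Rightarrow> real^'n \<Rightarrow> complex" where
  "wdiv \<Omega> q = (SOME w. L2 \<Omega> w \<and> weak_div \<Omega> q w)"

definition cvec :: "real^'n::finite \<Rightarrow> complex^'n" where
  "cvec v = (\<chi> i. complex_of_real (v $ i))"

text \<open>Weighted squared norms ||v||_gamma^2 = (gamma v, v): scalar weight, and matrix weight
  (the latter is real for Hermitian weights; we take its real part).\<close>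
definition wnorm2 :: "(real^'n::finite) set \<Rightarrow> (real^'n \<Rightarrow> real) \<Rightarrow> (real^'n \<Rightarrow> complex) \<Rightarrow> real" where
  "wnorm2 \<Omega> \<gamma> v = (\<integral>x. \<gamma> x * (cmod (v x))\<^sup>2 \<partial>lebesgue_on \<Omega>)"

definition wnorm2M :: "(real^'n::finite) set \<Rightarrow> (real^'n \<Rightarrow> complex^'n^'n) \<Rightarrow> (real^'n \<Rightarrow> complex^'n) \<Rightarrow> real" where
  "wnorm2M \<Omega> G v = Re (\<integral>x. cdot (G x *v v x) (v x) \<partial>lebesgue_on \<Omega>)"

definition solves_P1 :: "(real^'n::finite) set \<Rightarrow> (real^'n \<Rightarrow> complex^'n^'n) \<Rightarrow> (real^'n \<Rightarrow> real^'n)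
   \<Rightarrow> (real^'n \<Rightarrow> real) \<Rightarrow> (real^'n \<Rightarrow> complex) \<Rightarrow> (real^'n \<Rightarrow> complex) \<Rightarrow> (real^'n \<Rightarrow> complex^'n) \<Rightarrow> bool" where
  "solves_P1 \<Omega> A b c f u p \<longleftrightarrow> H10 \<Omega> u \<and> Hdiv \<Omega> p
     \<and> (AE x in lebesgue_on \<Omega>. p x = A x *v wgrad \<Omega> u x)
     \<and> (AE x in lebesgue_on \<Omega>. - wdiv \<Omega> p x + cdot (wgrad \<Omega> u x) (cvec (b x))
            + complex_of_real (c x) * u x = f x)"

end

theory Submission
  imports Defs "HOL-Analysis.Equivalence_Measurable_On_Borel"
begin


definition sqi :: "'a measure \<Rightarrow> ('a \<Rightarrow> complex) \<Rightarrow> bool" where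
  "sqi M f \<longleftrightarrow> f \<in> borel_measurable M \<and> integrable M (\<lambda>x. (cmod (f x))\<^sup>2)"

lemma L2_sqi: "L2 \<Omega> f = sqi (lebesgue_on \<Omega>) f"
  by (simp add: L2_def sqi_def)

lemma sqi_meas: "sqi M f \<Longrightarrow> f \<in> borel_measurable M"
  by (simp add: sqi_def)

lemma sqi_int: "sqi M f \<Longrightarrow> integrable M (\<lambda>x. (cmod (f x))\<^sup>2)"
  by (simp add: sqi_def)

lemma sqi_prod_int:
  assumes "sqi M f" "sqi M g"
  shows "integrable M (\<lambda>x. f x * g x)"
proof (rule Bochner_Integration.integrable_bound)
  show "integrable M (\<lambda>x. (cmod (f x))\<^sup>2 + (cmod (g x))\<^sup>2)"
    using assms by (auto simp: sqi_def)
  show "(\<lambda>x. f x * g x) \<in> borel_measurable M" using assms by (auto simp: sqi_def)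
  show "AE x in M. norm (f x * g x) \<le> norm ((cmod (f x))\<^sup>2 + (cmod (g x))\<^sup>2)"
  proof (rule AE_I2)
    fix x
    have "cmod (f x) * cmod (g x) \<le> (cmod (f x))\<^sup>2 + (cmod (g x))\<^sup>2"
      by (smt (verit) mult_left_le norm_ge_zero power2_eq_square mult_right_mono mult_mono zero_le_mult_iff)
    then show "norm (f x * g x) \<le> norm ((cmod (f x))\<^sup>2 + (cmod (g x))\<^sup>2)"
      by (simp add: norm_mult)
  qed
qed

lemma sqi_prod_int_abs:
  assumes "sqi M f" "sqi M g"
  shows "integrable M (\<lambda>x. cmod (f x) * cmod (g x))"
  using integrable_norm[OF sqi_prod_int[OF assms]] by (simp add: norm_mult)

lemma sqi_add:
  assumes "sqi M f" "sqi M g"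
  shows "sqi M (\<lambda>x. f x + g x)"
  unfolding sqi_def
proof
  show "(\<lambda>x. f x + g x) \<in> borel_measurable M" using assms by (auto simp: sqi_def)
  show "integrable M (\<lambda>x. (cmod (f x + g x))\<^sup>2)"
  proof (rule Bochner_Integration.integrable_bound)
    show "integrable M (\<lambda>x. 2 * (cmod (f x))\<^sup>2 + 2 * (cmod (g x))\<^sup>2)"
      using assms by (auto simp: sqi_def)
    show "(\<lambda>x. (cmod (f x + g x))\<^sup>2) \<in> borel_measurable M" using assms by (auto simp: sqi_def)
    show "AE x in M. norm ((cmod (f x + g x))\<^sup>2) \<le> norm (2 * (cmod (f x))\<^sup>2 + 2 * (cmod (g x))\<^sup>2)"
    proof (rule AE_I2)
      fix x
      have t: "cmod (f x + g x) \<le> cmod (f x) + cmod (g x)" by (rule norm_triangle_ineq)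
      have "(cmod (f x + g x))\<^sup>2 \<le> (cmod (f x) + cmod (g x))\<^sup>2"
        using t by (simp add: power_mono)
      also have "\<dots> \<le> 2 * (cmod (f x))\<^sup>2 + 2 * (cmod (g x))\<^sup>2"
        by (smt (verit) sum_squares_bound power2_sum)
      finally show "norm ((cmod (f x + g x))\<^sup>2) \<le> norm (2 * (cmod (f x))\<^sup>2 + 2 * (cmod (g x))\<^sup>2)"
        by simp
    qed
  qed
qed

lemma sqi_mult:
  assumes "sqi M f" "m \<in> borel_measurable M" "AE x in M. cmod (m x) \<le> B"
  shows "sqi M (\<lambda>x. m x * f x)"
  unfolding sqi_def
proof
  show "(\<lambda>x. m x * f x) \<in> borel_measurable M" using assms by (auto simp: sqi_def)
  show "integrable M (\<lambda>x. (cmod (m x * f x))\<^sup>2)"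
  proof (rule Bochner_Integration.integrable_bound)
    show "integrable M (\<lambda>x. B\<^sup>2 * (cmod (f x))\<^sup>2)"
      using assms by (auto simp: sqi_def)
    show "(\<lambda>x. (cmod (m x * f x))\<^sup>2) \<in> borel_measurable M" using assms by (auto simp: sqi_def)
    show "AE x in M. norm ((cmod (m x * f x))\<^sup>2) \<le> norm (B\<^sup>2 * (cmod (f x))\<^sup>2)"
      using assms(3)
    proof (rule AE_mp, intro AE_I2 impI)
      fix x assume "cmod (m x) \<le> B"
      then have "(cmod (m x))\<^sup>2 \<le> B\<^sup>2" by (simp add: power_mono)
      then show "norm ((cmod (m x * f x))\<^sup>2) \<le> norm (B\<^sup>2 * (cmod (f x))\<^sup>2)"
        by (simp add: norm_mult power_mult_distrib mult_right_mono)
    qed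
  qed
qed

lemma sqi_cmult: "sqi M f \<Longrightarrow> sqi M (\<lambda>x. a * f x)"
  using sqi_mult[of M f "\<lambda>_. a" "cmod a"] by auto

lemma sqi_uminus: "sqi M f \<Longrightarrow> sqi M (\<lambda>x. - f x)"
  using sqi_cmult[of M f "-1"] by simp

lemma sqi_diff: "sqi M f \<Longrightarrow> sqi M g \<Longrightarrow> sqi M (\<lambda>x. f x - g x)"
  using sqi_add[of M f "\<lambda>x. - g x"] sqi_uminus[of M g] by simp

lemma sqi_cnj: "sqi M f \<Longrightarrow> sqi M (\<lambda>x. cnj (f x))"
  by (simp add: sqi_def borel_measurable_continuous_on[OF continuous_on_cnj[OF continuous_on_id]])

lemma sqi_zero: "sqi M (\<lambda>x. 0)"
  by (simp add: sqi_def)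

lemma sqi_sum: "finite I \<Longrightarrow> (\<And>i. i \<in> I \<Longrightarrow> sqi M (f i)) \<Longrightarrow> sqi M (\<lambda>x. \<Sum>i\<in>I. f i x)"
  by (induction I rule: finite_induct) (auto intro: sqi_add sqi_zero)

lemma real_cs_aux:
  fixes I X Y :: real
  assumes "X \<ge> 0" "Y \<ge> 0" "\<And>t. t > 0 \<Longrightarrow> 2 * I \<le> t * X + Y / t"
  shows "I \<le> sqrt (X * Y)"
proof (cases "X > 0 \<and> Y > 0")
  case True
  define t where "t = sqrt Y / sqrt X"
  have tp: "t > 0" using True by (simp add: t_def)
  have "t * X = sqrt (X * Y)"
    using True by (simp add: t_def real_sqrt_mult field_simps)
  moreover have "Y / t = sqrt (X * Y)"
    using True by (simp add: t_def real_sqrt_mult field_simps)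
  ultimately show ?thesis using assms(3)[OF tp] by simp
next
  case False
  then have "X = 0 \<or> Y = 0" using assms by auto
  then show ?thesis
  proof
    assume X0: "X = 0"
    show ?thesis
    proof (rule ccontr)
      assume "\<not> ?thesis"
      then have Ip: "I > 0" using X0 by simp
      define t where "t = Y / I + 1"
      have tp: "t > 0" unfolding t_def using divide_nonneg_pos[OF assms(2) Ip] by linarith
      have "2 * I \<le> Y / t" using assms(3)[OF tp] X0 by simp
      also have "Y / t < I"
        using Ip assms(2) tp by (simp add: t_def field_simps)
      finally show False using Ip by simp
    qed
  next
    assume Y0: "Y = 0"
    show ?thesis
    proof (rule ccontr)
      assume "\<not> ?thesis"
      then have Ip: "I > 0" using Y0 by simp
      define t where "t = I / (X + 1)"
      have tp: "t > 0" using Ip assms by (simp add: t_def add_pos_nonneg)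
      have "2 * I \<le> t * X" using assms(3)[OF tp] Y0 by simp
      also have "t * X < I"
        using Ip assms(1) tp by (simp add: t_def field_simps)
      finally show False using Ip by simp
    qed
  qed
qed

lemma sqi_cs:
  assumes "sqi M f" "sqi M g"
  shows "(\<integral>x. cmod (f x) * cmod (g x) \<partial>M) \<le> sqrt ((\<integral>x. (cmod (f x))\<^sup>2 \<partial>M) * (\<integral>x. (cmod (g x))\<^sup>2 \<partial>M))"
proof (rule real_cs_aux)
  show "0 \<le> (\<integral>x. (cmod (f x))\<^sup>2 \<partial>M)" "0 \<le> (\<integral>x. (cmod (g x))\<^sup>2 \<partial>M)"
    by auto
  fix t :: real assume t: "t > 0"
  have "2 * (\<integral>x. cmod (f x) * cmod (g x) \<partial>M) = (\<integral>x. 2 * (cmod (f x) * cmod (g x)) \<partial>M)"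
    by simp
  also have "\<dots> \<le> (\<integral>x. t * (cmod (f x))\<^sup>2 + (cmod (g x))\<^sup>2 / t \<partial>M)"
  proof (rule integral_mono)
    show "integrable M (\<lambda>x. 2 * (cmod (f x) * cmod (g x)))"
      using sqi_prod_int_abs[OF assms] by simp
    show "integrable M (\<lambda>x. t * (cmod (f x))\<^sup>2 + (cmod (g x))\<^sup>2 / t)"
      using assms by (auto simp: sqi_def)
    fix x
    have "0 \<le> (sqrt t * cmod (f x) - cmod (g x) / sqrt t)\<^sup>2" by simp
    also have "\<dots> = t * (cmod (f x))\<^sup>2 + (cmod (g x))\<^sup>2 / t - 2 * (cmod (f x) * cmod (g x))"
      using t by (simp add: power2_diff power_mult_distrib power_divide field_simps)
    finally show "2 * (cmod (f x) * cmod (g x)) \<le> t * (cmod (f x))\<^sup>2 + (cmod (g x))\<^sup>2 / t"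
      by simp
  qed
  also have "\<dots> = t * (\<integral>x. (cmod (f x))\<^sup>2 \<partial>M) + (\<integral>x. (cmod (g x))\<^sup>2 \<partial>M) / t"
    using assms by (simp add: sqi_def)
  finally show "2 * (\<integral>x. cmod (f x) * cmod (g x) \<partial>M) \<le> t * (\<integral>x. (cmod (f x))\<^sup>2 \<partial>M) + (\<integral>x. (cmod (g x))\<^sup>2 \<partial>M) / t" .
qed


lemma sqi_sq_le:
  assumes "sqi M f" "sqi M g"
  shows "(\<integral>x. (cmod (f x))\<^sup>2 \<partial>M) \<le> 2 * (\<integral>x. (cmod (f x - g x))\<^sup>2 \<partial>M) + 2 * (\<integral>x. (cmod (g x))\<^sup>2 \<partial>M)"
proof -
  have d: "sqi M (\<lambda>x. f x - g x)" using assms by (rule sqi_diff)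
  have "(\<integral>x. (cmod (f x))\<^sup>2 \<partial>M) \<le> (\<integral>x. 2 * (cmod (f x - g x))\<^sup>2 + 2 * (cmod (g x))\<^sup>2 \<partial>M)"
  proof (rule integral_mono)
    show "integrable M (\<lambda>x. (cmod (f x))\<^sup>2)" using assms by (simp add: sqi_def)
    show "integrable M (\<lambda>x. 2 * (cmod (f x - g x))\<^sup>2 + 2 * (cmod (g x))\<^sup>2)"
      using d assms by (simp add: sqi_def)
    fix x
    have "cmod (f x) \<le> cmod (f x - g x) + cmod (g x)"
      by (metis diff_add_cancel norm_triangle_ineq)
    then have "(cmod (f x))\<^sup>2 \<le> (cmod (f x - g x) + cmod (g x))\<^sup>2" by (simp add: power_mono)
    also have "\<dots> \<le> 2 * (cmod (f x - g x))\<^sup>2 + 2 * (cmod (g x))\<^sup>2"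
      by (smt (verit) sum_squares_bound power2_sum)
    finally show "(cmod (f x))\<^sup>2 \<le> 2 * (cmod (f x - g x))\<^sup>2 + 2 * (cmod (g x))\<^sup>2" .
  qed
  also have "\<dots> = 2 * (\<integral>x. (cmod (f x - g x))\<^sup>2 \<partial>M) + 2 * (\<integral>x. (cmod (g x))\<^sup>2 \<partial>M)"
    using d assms by (simp add: sqi_def)
  finally show ?thesis .
qed

lemma sqi_ip_bound:
  assumes "sqi M f" "sqi M g"
  shows "cmod (\<integral>x. f x * cnj (g x) \<partial>M) \<le> sqrt ((\<integral>x. (cmod (f x))\<^sup>2 \<partial>M) * (\<integral>x. (cmod (g x))\<^sup>2 \<partial>M))"
proof -
  have "cmod (\<integral>x. f x * cnj (g x) \<partial>M) \<le> (\<integral>x. cmod (f x * cnj (g x)) \<partial>M)"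
    by (rule integral_norm_bound)
  also have "\<dots> = (\<integral>x. cmod (f x) * cmod (g x) \<partial>M)" by (simp add: norm_mult)
  also have "\<dots> \<le> sqrt ((\<integral>x. (cmod (f x))\<^sup>2 \<partial>M) * (\<integral>x. (cmod (g x))\<^sup>2 \<partial>M))"
    using assms by (rule sqi_cs)
  finally show ?thesis .
qed

lemma sqi_conv:
  assumes F: "\<And>k. sqi M (F k)" "sqi M F0" and G: "\<And>k. sqi M (G k)" "sqi M G0"
    and cF: "(\<lambda>k. \<integral>x. (cmod (F k x - F0 x))\<^sup>2 \<partial>M) \<longlonglongrightarrow> 0"
    and cG: "(\<lambda>k. \<integral>x. (cmod (G k x - G0 x))\<^sup>2 \<partial>M) \<longlonglongrightarrow> 0"
  shows "(\<lambda>k. \<integral>x. F k x * cnj (G k x) \<partial>M) \<longlonglongrightarrow> (\<integral>x. F0 x * cnj (G0 x) \<partial>M)"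
proof -
  define XF where "XF k = (\<integral>x. (cmod (F k x - F0 x))\<^sup>2 \<partial>M)" for k
  define XG where "XG k = (\<integral>x. (cmod (G k x - G0 x))\<^sup>2 \<partial>M)" for k
  define NF where "NF = (\<integral>x. (cmod (F0 x))\<^sup>2 \<partial>M)"
  define NG where "NG = (\<integral>x. (cmod (G0 x))\<^sup>2 \<partial>M)"
  have XFn: "XF k \<ge> 0" for k by (simp add: XF_def)
  have XGn: "XG k \<ge> 0" for k by (simp add: XG_def)
  have NFn: "NF \<ge> 0" by (simp add: NF_def)
  have NGn: "NG \<ge> 0" by (simp add: NG_def)
  have bound: "cmod ((\<integral>x. F k x * cnj (G k x) \<partial>M) - (\<integral>x. F0 x * cnj (G0 x) \<partial>M))
      \<le> sqrt (XF k * (2 * XG k + 2 * NG)) + sqrt (NF * XG k)" for k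
  proof -
    have dF: "sqi M (\<lambda>x. F k x - F0 x)" using F by (rule sqi_diff)
    have dG: "sqi M (\<lambda>x. G k x - G0 x)" using G by (rule sqi_diff)
    have i1: "integrable M (\<lambda>x. (F k x - F0 x) * cnj (G k x))"
      by (rule sqi_prod_int[OF dF sqi_cnj[OF G(1)]])
    have i2: "integrable M (\<lambda>x. F0 x * cnj (G k x - G0 x))"
      by (rule sqi_prod_int[OF F(2) sqi_cnj[OF dG]])
    have i3: "integrable M (\<lambda>x. F k x * cnj (G k x))"
      by (rule sqi_prod_int[OF F(1) sqi_cnj[OF G(1)]])
    have i4: "integrable M (\<lambda>x. F0 x * cnj (G0 x))"
      by (rule sqi_prod_int[OF F(2) sqi_cnj[OF G(2)]])
    have "(\<integral>x. F k x * cnj (G k x) \<partial>M) - (\<integral>x. F0 x * cnj (G0 x) \<partial>M)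
        = (\<integral>x. F k x * cnj (G k x) - F0 x * cnj (G0 x) \<partial>M)"
      using i3 i4 by simp
    also have "\<dots> = (\<integral>x. (F k x - F0 x) * cnj (G k x) + F0 x * cnj (G k x - G0 x) \<partial>M)"
      by (rule Bochner_Integration.integral_cong) (auto simp: algebra_simps)
    also have "\<dots> = (\<integral>x. (F k x - F0 x) * cnj (G k x) \<partial>M) + (\<integral>x. F0 x * cnj (G k x - G0 x) \<partial>M)"
      using i1 i2 by simp
    finally have eq: "(\<integral>x. F k x * cnj (G k x) \<partial>M) - (\<integral>x. F0 x * cnj (G0 x) \<partial>M)
        = (\<integral>x. (F k x - F0 x) * cnj (G k x) \<partial>M) + (\<integral>x. F0 x * cnj (G k x - G0 x) \<partial>M)" .
    have b1: "cmod (\<integral>x. (F k x - F0 x) * cnj (G k x) \<partial>M) \<le> sqrt (XF k * (2 * XG k + 2 * NG))"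
    proof -
      have "cmod (\<integral>x. (F k x - F0 x) * cnj (G k x) \<partial>M) \<le> sqrt (XF k * (\<integral>x. (cmod (G k x))\<^sup>2 \<partial>M))"
        using sqi_ip_bound[OF dF G(1)] by (simp add: XF_def)
      also have "\<dots> \<le> sqrt (XF k * (2 * XG k + 2 * NG))"
        using sqi_sq_le[OF G(1) G(2)] XFn by (simp add: XG_def NG_def mult_left_mono)
      finally show ?thesis .
    qed
    have b2: "cmod (\<integral>x. F0 x * cnj (G k x - G0 x) \<partial>M) \<le> sqrt (NF * XG k)"
      using sqi_ip_bound[OF F(2) dG] by (simp add: NF_def XG_def)
    show ?thesis unfolding eq using b1 b2 norm_triangle_ineq[of "\<integral>x. (F k x - F0 x) * cnj (G k x) \<partial>M" "\<integral>x. F0 x * cnj (G k x - G0 x) \<partial>M"]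
      by linarith
  qed
  have lim: "(\<lambda>k. sqrt (XF k * (2 * XG k + 2 * NG)) + sqrt (NF * XG k)) \<longlonglongrightarrow> sqrt (0 * (2 * 0 + 2 * NG)) + sqrt (NF * 0)"
    using cF cG unfolding XF_def[symmetric] XG_def[symmetric]
    by (intro tendsto_intros)
  have "(\<lambda>k. (\<integral>x. F k x * cnj (G k x) \<partial>M) - (\<integral>x. F0 x * cnj (G0 x) \<partial>M)) \<longlonglongrightarrow> 0"
    by (rule Lim_null_comparison[OF _ lim[simplified]]) (use bound in auto)
  then show ?thesis by (simp add: LIM_zero_iff)
qed

lemma sqi_conv_mult:
  assumes "\<And>k. sqi M (F k)" "sqi M F0" "m \<in> borel_measurable M" "AE x in M. cmod (m x) \<le> B"
    and "(\<lambda>k. \<integral>x. (cmod (F k x - F0 x))\<^sup>2 \<partial>M) \<longlonglongrightarrow> 0"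
  shows "(\<lambda>k. \<integral>x. (cmod (m x * F k x - m x * F0 x))\<^sup>2 \<partial>M) \<longlonglongrightarrow> 0"
proof -
  have B0: "AE x in M. cmod (m x) \<le> max B 0" using assms(4) by (auto elim: AE_mp)
  have "(\<lambda>k. (max B 0)\<^sup>2 * (\<integral>x. (cmod (F k x - F0 x))\<^sup>2 \<partial>M)) \<longlonglongrightarrow> (max B 0)\<^sup>2 * 0"
    using assms(5) by (intro tendsto_intros)
  then have lim: "(\<lambda>k. (max B 0)\<^sup>2 * (\<integral>x. (cmod (F k x - F0 x))\<^sup>2 \<partial>M)) \<longlonglongrightarrow> 0" by simp
  show ?thesis
  proof (rule Lim_null_comparison[OF _ lim], rule always_eventually, rule allI)
    fix k
    have d: "sqi M (\<lambda>x. F k x - F0 x)" using assms(1,2) by (rule sqi_diff)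
    have dm: "sqi M (\<lambda>x. m x * (F k x - F0 x))" using sqi_mult[OF d assms(3) B0] .
    have "(\<integral>x. (cmod (m x * F k x - m x * F0 x))\<^sup>2 \<partial>M) \<le> (\<integral>x. (max B 0)\<^sup>2 * (cmod (F k x - F0 x))\<^sup>2 \<partial>M)"
    proof (rule integral_mono_AE)
      show "integrable M (\<lambda>x. (cmod (m x * F k x - m x * F0 x))\<^sup>2)"
        using dm by (simp add: sqi_def algebra_simps)
      show "integrable M (\<lambda>x. (max B 0)\<^sup>2 * (cmod (F k x - F0 x))\<^sup>2)" using d by (simp add: sqi_def)
      show "AE x in M. (cmod (m x * F k x - m x * F0 x))\<^sup>2 \<le> (max B 0)\<^sup>2 * (cmod (F k x - F0 x))\<^sup>2"
        using B0
      proof (rule AE_mp, intro AE_I2 impI)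
        fix x assume "cmod (m x) \<le> max B 0"
        then have "(cmod (m x))\<^sup>2 \<le> (max B 0)\<^sup>2" by (simp add: power_mono)
        then show "(cmod (m x * F k x - m x * F0 x))\<^sup>2 \<le> (max B 0)\<^sup>2 * (cmod (F k x - F0 x))\<^sup>2"
          by (simp add: right_diff_distrib[symmetric] norm_mult power_mult_distrib mult_right_mono)
      qed
    qed
    also have "\<dots> = (max B 0)\<^sup>2 * (\<integral>x. (cmod (F k x - F0 x))\<^sup>2 \<partial>M)" by simp
    finally show "norm (\<integral>x. (cmod (m x * F k x - m x * F0 x))\<^sup>2 \<partial>M) \<le> (max B 0)\<^sup>2 * (\<integral>x. (cmod (F k x - F0 x))\<^sup>2 \<partial>M)"
      by simp
  qed
qed


lemma pderiv_add:
  assumes "f differentiable (at x)" "g differentiable (at x)"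
  shows "pderiv i (\<lambda>y. f y + g y) x = pderiv i f x + pderiv i g x"
proof -
  have "((\<lambda>y. f y + g y) has_derivative (\<lambda>h. frechet_derivative f (at x) h + frechet_derivative g (at x) h)) (at x)"
    using assms by (intro has_derivative_add) (simp_all add: frechet_derivative_works[symmetric])
  then have "frechet_derivative (\<lambda>y. f y + g y) (at x) = (\<lambda>h. frechet_derivative f (at x) h + frechet_derivative g (at x) h)"
    by (simp add: frechet_derivative_at[symmetric])
  then show ?thesis by (simp add: pderiv_def)
qed

lemma pderiv_cmult:
  assumes "f differentiable (at x)"
  shows "pderiv i (\<lambda>y. a * f y) x = a * pderiv i f x"
proof -
  have "((\<lambda>y. a * f y) has_derivative (\<lambda>h. a * frechet_derivative f (at x) h)) (at x)"
    using assms by (intro has_derivative_mult_right) (simp_all add: frechet_derivative_works[symmetric])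
  then have "frechet_derivative (\<lambda>y. a * f y) (at x) = (\<lambda>h. a * frechet_derivative f (at x) h)"
    by (simp add: frechet_derivative_at[symmetric])
  then show ?thesis by (simp add: pderiv_def)
qed

lemma pderiv_mult:
  assumes "f differentiable (at x)" "g differentiable (at x)"
  shows "pderiv i (\<lambda>y. f y * g y) x = f x * pderiv i g x + pderiv i f x * g x"
proof -
  have "((\<lambda>y. f y * g y) has_derivative (\<lambda>h. f x * frechet_derivative g (at x) h + frechet_derivative f (at x) h * g x)) (at x)"
    using assms by (intro has_derivative_mult) (simp_all add: frechet_derivative_works[symmetric])
  then have "frechet_derivative (\<lambda>y. f y * g y) (at x) = (\<lambda>h. f x * frechet_derivative g (at x) h + frechet_derivative f (at x) h * g x)"
    by (simp add: frechet_derivative_at[symmetric])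
  then show ?thesis by (simp add: pderiv_def)
qed

definition smoothn :: "nat \<Rightarrow> (real^'n::finite \<Rightarrow> real) \<Rightarrow> bool" where
  "smoothn n f \<longleftrightarrow> (\<forall>is. length is \<le> n \<longrightarrow> (\<forall>x. iter_pderiv is f differentiable (at x)))"

lemma smooth_smoothn: "smooth f \<longleftrightarrow> (\<forall>n. smoothn n f)"
  unfolding smooth_def smoothn_def by auto

lemma smoothn_mono: "smoothn n f \<Longrightarrow> m \<le> n \<Longrightarrow> smoothn m f"
  unfolding smoothn_def by auto

lemma iter_snoc: "iter_pderiv (is @ [i]) f = iter_pderiv is (pderiv i f)"
  by (induction "is") auto

lemma smoothn_pderiv: 
  assumes "smoothn (Suc n) f" shows "smoothn n (pderiv i f)"
  unfolding smoothn_def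
proof (intro allI impI)
  fix "is" :: "'a list" and x assume l: "length is \<le> n"
  have "length (is @ [i]) \<le> Suc n" using l by simp
  then have "iter_pderiv (is @ [i]) f differentiable (at x)" using assms unfolding smoothn_def by blast
  then show "iter_pderiv is (pderiv i f) differentiable (at x)" by (simp add: iter_snoc)
qed

lemma iter_add:
  assumes "smoothn n f" "smoothn n g"
  shows "length is \<le> n \<Longrightarrow> iter_pderiv is (\<lambda>x. f x + g x) = (\<lambda>x. iter_pderiv is f x + iter_pderiv is g x)"
proof (induction "is")
  case Nil then show ?case by simp
next
  case (Cons i "is")
  then have l: "length is \<le> n" by simp
  have d: "\<And>x. iter_pderiv is f differentiable (at x)" "\<And>x. iter_pderiv is g differentiable (at x)"
    using assms l unfolding smoothn_def by auto
  show ?case using Cons l by (simp add: pderiv_add[OF d(1) d(2)])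
qed

lemma smoothn_add:
  assumes "smoothn n f" "smoothn n g" shows "smoothn n (\<lambda>x. f x + g x)"
  unfolding smoothn_def[of n "\<lambda>x. f x + g x"]
proof (intro allI impI)
  fix "is" :: "'a list" and x assume l: "length is \<le> n"
  have d: "iter_pderiv is f differentiable (at x)" "iter_pderiv is g differentiable (at x)"
    using assms l unfolding smoothn_def by blast+
  show "iter_pderiv is (\<lambda>x. f x + g x) differentiable (at x)"
    unfolding iter_add[OF assms l] using differentiable_add[OF d] .
qed

lemma iter_cmult:
  assumes "smoothn n f"
  shows "length is \<le> n \<Longrightarrow> iter_pderiv is (\<lambda>x. a * f x) = (\<lambda>x. a * iter_pderiv is f x)"
proof (induction "is")
  case Nil then show ?case by simp
next
  case (Cons i "is")
  then have l: "length is \<le> n" by simp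
  have d: "\<And>x. iter_pderiv is f differentiable (at x)"
    using assms l unfolding smoothn_def by auto
  show ?case using Cons l by (simp add: pderiv_cmult[OF d])
qed

lemma smoothn_cmult:
  assumes "smoothn n f" shows "smoothn n (\<lambda>x. a * f x)"
  unfolding smoothn_def[of n "\<lambda>x. a * f x"]
proof (intro allI impI)
  fix "is" :: "'a list" and x assume l: "length is \<le> n"
  have d: "iter_pderiv is f differentiable (at x)"
    using assms l unfolding smoothn_def by blast
  show "iter_pderiv is (\<lambda>x. a * f x) differentiable (at x)"
    unfolding iter_cmult[OF assms l] using differentiable_mult[OF differentiable_const d] .
qed

lemma smoothn_mult: "smoothn n f \<Longrightarrow> smoothn n g \<Longrightarrow> smoothn n (\<lambda>x. f x * g x)"
proof (induction n arbitrary: f g)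
  case 0
  then show ?case unfolding smoothn_def
    by (auto intro!: differentiable_mult)
next
  case (Suc n)
  show ?case unfolding smoothn_def
  proof (intro allI impI)
    fix "is" :: "'a list" and x
    assume l: "length is \<le> Suc n"
    show "iter_pderiv is (\<lambda>x. f x * g x) differentiable (at x)"
    proof (cases "length is \<le> n")
      case True
      have "smoothn n (\<lambda>x. f x * g x)"
        using Suc.IH Suc.prems smoothn_mono le_SucI by blast
      then show ?thesis using True unfolding smoothn_def by auto
    next
      case False
      then have ne: "is \<noteq> []" by auto
      then obtain js i where js: "is = js @ [i]" by (metis rev_exhaust)
      then have lj: "length js \<le> n" using l by simp
      have l0: "length ([]::'a list) \<le> Suc n" by simp
      have df: "\<And>x. f differentiable (at x)" "\<And>x. g differentiable (at x)"
        using Suc.prems[unfolded smoothn_def, rule_format, OF l0] by simp_all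
      have pe: "pderiv i (\<lambda>x. f x * g x) = (\<lambda>x. f x * pderiv i g x + pderiv i f x * g x)"
        using pderiv_mult[OF df(1) df(2)] by blast
      have fn: "smoothn n f" by (rule smoothn_mono[OF Suc.prems(1)]) simp
      have gn: "smoothn n g" by (rule smoothn_mono[OF Suc.prems(2)]) simp
      have s1: "smoothn n (\<lambda>x. f x * pderiv i g x)"
        using Suc.IH[OF fn smoothn_pderiv[OF Suc.prems(2)]] .
      have s2: "smoothn n (\<lambda>x. pderiv i f x * g x)"
        using Suc.IH[OF smoothn_pderiv[OF Suc.prems(1)] gn] .
      have "smoothn n (\<lambda>x. f x * pderiv i g x + pderiv i f x * g x)"
        by (rule smoothn_add[OF s1 s2])
      then show ?thesis using lj unfolding js iter_snoc pe smoothn_def by auto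
    qed
  qed
qed

lemma smooth_add: "smooth f \<Longrightarrow> smooth g \<Longrightarrow> smooth (\<lambda>x. f x + g x)"
  by (simp add: smooth_smoothn smoothn_add)
lemma smooth_cmult: "smooth f \<Longrightarrow> smooth (\<lambda>x. a * f x)"
  by (simp add: smooth_smoothn smoothn_cmult)
lemma smooth_mult: "smooth f \<Longrightarrow> smooth g \<Longrightarrow> smooth (\<lambda>x. f x * g x)"
  by (simp add: smooth_smoothn smoothn_mult)
lemma smooth_diff: "smooth f \<Longrightarrow> smooth g \<Longrightarrow> smooth (\<lambda>x. f x - g x)"
  using smooth_add[of f "\<lambda>x. (-1) * g x"] smooth_cmult[of g "-1"] by simp

lemma smooth_pderiv: "smooth f \<Longrightarrow> smooth (pderiv i f)"
  by (simp add: smooth_smoothn smoothn_pderiv)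

lemma smooth_differentiable: "smooth f \<Longrightarrow> f differentiable (at x)"
  unfolding smooth_def by (metis iter_pderiv.simps(1))

lemma smooth_continuous: "smooth f \<Longrightarrow> continuous_on UNIV f"
  by (intro continuous_at_imp_continuous_on ballI differentiable_imp_continuous_within smooth_differentiable)

lemma pderiv_outside:
  assumes "x \<notin> closure {y. f y \<noteq> 0}"
  shows "pderiv i f x = 0"
proof -
  define U where "U = - closure {y. f y \<noteq> 0}"
  have U1: "open U" unfolding U_def by (rule open_Compl[OF closed_closure])
  have U2: "x \<in> U" unfolding U_def using assms by (simp only: Compl_iff not_False_eq_True)
  have z: "0 = f y" if "y \<in> U" for y
  proof -
    have "y \<notin> closure {y. f y \<noteq> 0}" using that unfolding U_def by (rule ComplD)
    then have "y \<notin> {y. f y \<noteq> 0}" by (rule contra_subsetD[OF closure_subset])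
    then show ?thesis by (simp only: mem_Collect_eq not_not)
  qed
  have "((\<lambda>y. 0) has_derivative (\<lambda>h. 0)) (at x)" by (rule has_derivative_const)
  then have "(f has_derivative (\<lambda>h. 0)) (at x)"
    by (rule has_derivative_transform_within_open[OF _ U1 U2 z])
  then have "frechet_derivative f (at x) = (\<lambda>h. 0)" by (rule frechet_derivative_at[symmetric])
  then show ?thesis by (simp add: pderiv_def)
qed

lemma compact_sub:
  fixes S T :: "(real^'n::finite) set"
  shows "compact S \<Longrightarrow> T \<subseteq> S \<Longrightarrow> compact (closure T)"
  by (meson bounded_closure bounded_subset compact_imp_bounded compact_eq_bounded_closed closed_closure)

lemma test_fun_diff:
  assumes "test_fun \<Omega> a" "test_fun \<Omega> b"
  shows "test_fun \<Omega> (\<lambda>x. a x - b x)"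
proof -
  have s0: "{x. a x - b x \<noteq> 0} \<subseteq> {x. a x \<noteq> 0} \<union> {x. b x \<noteq> 0}" by auto
  have sub: "closure {x. a x - b x \<noteq> 0} \<subseteq> closure {x. a x \<noteq> 0} \<union> closure {x. b x \<noteq> 0}"
    using closure_mono[OF s0] closure_Un by blast
  have c: "compact (closure {x. a x \<noteq> 0} \<union> closure {x. b x \<noteq> 0})" using assms by (simp add: test_fun_def compact_Un)
  have "compact (closure {x. a x - b x \<noteq> 0})"
    by (rule compact_sub[OF c]) (use s0 closure_subset in blast)
  moreover have "smooth (\<lambda>x. a x - b x)" using assms by (simp add: test_fun_def smooth_diff)
  moreover have "closure {x. a x - b x \<noteq> 0} \<subseteq> \<Omega>" using sub assms unfolding test_fun_def by blast
  ultimately show ?thesis unfolding test_fun_def by blast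
qed

lemma test_fun_sq:
  assumes "test_fun \<Omega> a" "test_fun \<Omega> b"
  shows "test_fun \<Omega> (\<lambda>x. a x * a x + b x * b x)"
proof -
  have s0: "{x. a x * a x + b x * b x \<noteq> 0} \<subseteq> {x. a x \<noteq> 0} \<union> {x. b x \<noteq> 0}" by auto
  have sub: "closure {x. a x * a x + b x * b x \<noteq> 0} \<subseteq> closure {x. a x \<noteq> 0} \<union> closure {x. b x \<noteq> 0}"
    using closure_mono[OF s0] closure_Un by blast
  have c: "compact (closure {x. a x \<noteq> 0} \<union> closure {x. b x \<noteq> 0})" using assms by (simp add: test_fun_def compact_Un)
  have "compact (closure {x. a x * a x + b x * b x \<noteq> 0})"
    by (rule compact_sub[OF c]) (use s0 closure_subset in blast)
  moreover have "smooth (\<lambda>x. a x * a x + b x * b x)" using assms by (simp add: test_fun_def smooth_add smooth_mult)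
  moreover have "closure {x. a x * a x + b x * b x \<noteq> 0} \<subseteq> \<Omega>" using sub assms unfolding test_fun_def by blast
  ultimately show ?thesis unfolding test_fun_def by blast
qed


lemma open_lebesgue: "open (\<Omega>::(real^'n::finite) set) \<Longrightarrow> \<Omega> \<in> sets lebesgue"
  by (metis borel_open sets_completionI_sets sets_lborel)

lemma compact_ind_int:
  fixes \<Omega> :: "(real^'n::finite) set"
  assumes "open \<Omega>" "compact K" "K \<subseteq> \<Omega>"
  shows "integrable (lebesgue_on \<Omega>) (indicator K :: _ \<Rightarrow> real)"
proof -
  have O: "\<Omega> \<inter> space lebesgue \<in> sets lebesgue" using open_lebesgue[OF assms(1)] by simp
  have Kl: "K \<in> lmeasurable" by (rule lmeasurable_compact[OF assms(2)])
  have "K \<in> sets (lebesgue_on \<Omega>)"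
    using Kl assms(3) O by (simp add: sets_restrict_space_iff fmeasurable_def Int_absorb2)
  moreover have "emeasure (lebesgue_on \<Omega>) K = emeasure lebesgue K"
    using O assms(3) by (rule emeasure_restrict_space)
  moreover have "emeasure lebesgue K < \<infinity>" using Kl unfolding fmeasurable_def by blast
  ultimately show ?thesis by (simp add: integrable_real_indicator)
qed

lemma cc_sqi:
  fixes \<Omega> :: "(real^'n::finite) set" and h :: "real^'n \<Rightarrow> real"
  assumes "open \<Omega>" "continuous_on UNIV h" "compact K" "K \<subseteq> \<Omega>" "\<And>x. x \<notin> K \<Longrightarrow> h x = 0"
  shows "sqi (lebesgue_on \<Omega>) (\<lambda>x. complex_of_real (h x))"
  unfolding sqi_def
proof
  have hc: "continuous_on \<Omega> (\<lambda>x. complex_of_real (h x))"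
    by (intro continuous_intros continuous_on_subset[OF assms(2)]) auto
  show "(\<lambda>x. complex_of_real (h x)) \<in> borel_measurable (lebesgue_on \<Omega>)"
    by (rule continuous_imp_measurable_on_sets_lebesgue[OF hc open_lebesgue[OF assms(1)]])
  obtain B where B: "\<And>x. x \<in> K \<Longrightarrow> norm (h x) \<le> B"
    using compact_imp_bounded[OF compact_continuous_image[OF continuous_on_subset[OF assms(2)] assms(3)]]
    unfolding bounded_iff by auto
  show "integrable (lebesgue_on \<Omega>) (\<lambda>x. (cmod (complex_of_real (h x)))\<^sup>2)"
  proof (rule Bochner_Integration.integrable_bound)
    show "integrable (lebesgue_on \<Omega>) (\<lambda>x. B\<^sup>2 * indicator K x)"
      using compact_ind_int[OF assms(1,3,4)] by simp
    have "(\<lambda>x. h x) \<in> borel_measurable (lebesgue_on \<Omega>)"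
      by (rule continuous_imp_measurable_on_sets_lebesgue[OF continuous_on_subset[OF assms(2)] open_lebesgue[OF assms(1)]]) auto
    then show "(\<lambda>x. (cmod (complex_of_real (h x)))\<^sup>2) \<in> borel_measurable (lebesgue_on \<Omega>)"
      by simp
    show "AE x in lebesgue_on \<Omega>. norm ((cmod (complex_of_real (h x)))\<^sup>2) \<le> norm (B\<^sup>2 * indicator K x)"
    proof (rule AE_I2)
      fix x
      show "norm ((cmod (complex_of_real (h x)))\<^sup>2) \<le> norm (B\<^sup>2 * indicator K x)"
      proof (cases "x \<in> K")
        case True
        then have "\<bar>h x\<bar> \<le> B" using B by simp
        then have "(h x)\<^sup>2 \<le> B\<^sup>2" by (metis abs_le_square_iff abs_of_nonneg abs_ge_zero order_trans power2_abs)
        then show ?thesis using True by simp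
      next
        case False then show ?thesis using assms(5) by simp
      qed
    qed
  qed
qed


definition TT :: "(real^'n::finite \<Rightarrow> real) \<Rightarrow> (real^'n \<Rightarrow> real) \<Rightarrow> real^'n \<Rightarrow> complex" where
  "TT a b x = complex_of_real (a x) + \<i> * complex_of_real (b x)"

definition dTT :: "'n::finite \<Rightarrow> (real^'n \<Rightarrow> real) \<Rightarrow> (real^'n \<Rightarrow> real) \<Rightarrow> real^'n \<Rightarrow> complex" where
  "dTT i a b x = complex_of_real (pderiv i a x) + \<i> * complex_of_real (pderiv i b x)"

lemma test_sqi:
  assumes "open \<Omega>" "test_fun \<Omega> a"
  shows "sqi (lebesgue_on \<Omega>) (\<lambda>x. complex_of_real (a x))"
proof (rule cc_sqi[OF assms(1)])
  show "continuous_on UNIV a" using assms(2) by (simp add: test_fun_def smooth_continuous)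
  show "compact (closure {x. a x \<noteq> 0})" "closure {x. a x \<noteq> 0} \<subseteq> \<Omega>"
    using assms(2) by (simp_all add: test_fun_def)
  fix x assume "x \<notin> closure {x. a x \<noteq> 0}"
  then have "x \<notin> {x. a x \<noteq> 0}" by (rule contra_subsetD[OF closure_subset])
  then show "a x = 0" by (simp only: mem_Collect_eq not_not)
qed

lemma test_d_sqi:
  assumes "open \<Omega>" "test_fun \<Omega> a"
  shows "sqi (lebesgue_on \<Omega>) (\<lambda>x. complex_of_real (pderiv i a x))"
proof (rule cc_sqi[OF assms(1)])
  show "continuous_on UNIV (pderiv i a)" using assms(2) by (simp add: test_fun_def smooth_continuous smooth_pderiv)
  show "compact (closure {x. a x \<noteq> 0})" "closure {x. a x \<noteq> 0} \<subseteq> \<Omega>"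
    using assms(2) by (simp_all add: test_fun_def)
  fix x assume "x \<notin> closure {x. a x \<noteq> 0}"
  then show "pderiv i a x = 0" by (rule pderiv_outside)
qed

lemma TT_sqi: "open \<Omega> \<Longrightarrow> test_fun \<Omega> a \<Longrightarrow> test_fun \<Omega> b \<Longrightarrow> sqi (lebesgue_on \<Omega>) (TT a b)"
  unfolding TT_def by (intro sqi_add sqi_cmult test_sqi)

lemma dTT_sqi: "open \<Omega> \<Longrightarrow> test_fun \<Omega> a \<Longrightarrow> test_fun \<Omega> b \<Longrightarrow> sqi (lebesgue_on \<Omega>) (dTT i a b)"
  unfolding dTT_def by (intro sqi_add sqi_cmult test_d_sqi)

definition approx :: "(real^'n::finite) set \<Rightarrow> (real^'n \<Rightarrow> complex) \<Rightarrow> ('n \<Rightarrow> real^'n \<Rightarrow> complex)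
    \<Rightarrow> (nat \<Rightarrow> real^'n \<Rightarrow> real) \<Rightarrow> (nat \<Rightarrow> real^'n \<Rightarrow> real) \<Rightarrow> bool" where
  "approx \<Omega> e G a b \<longleftrightarrow> (\<forall>k. test_fun \<Omega> (a k) \<and> test_fun \<Omega> (b k))
     \<and> (\<lambda>k. \<integral>x. (cmod (TT (a k) (b k) x - e x))\<^sup>2 \<partial>lebesgue_on \<Omega>) \<longlonglongrightarrow> 0
     \<and> (\<forall>i. (\<lambda>k. \<integral>x. (cmod (dTT i (a k) (b k) x - G i x))\<^sup>2 \<partial>lebesgue_on \<Omega>) \<longlonglongrightarrow> 0)"

lemma wgrad_sqi: "H1 \<Omega> u \<Longrightarrow> sqi (lebesgue_on \<Omega>) (\<lambda>x. wgrad \<Omega> u x $ i)"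
proof -
  assume "H1 \<Omega> u"
  then have "\<exists>g. L2 \<Omega> g \<and> weak_partial \<Omega> u i g" by (simp add: H1_def)
  then have "L2 \<Omega> (SOME g. L2 \<Omega> g \<and> weak_partial \<Omega> u i g)" by (rule someI2_ex) simp
  then show ?thesis by (simp add: wgrad_def L2_sqi)
qed

lemma H10_approx:
  assumes "H10 \<Omega> u"
  shows "\<exists>a b. approx \<Omega> u (\<lambda>i x. wgrad \<Omega> u x $ i) a b"
proof -
  obtain a b :: "nat \<Rightarrow> real^'a \<Rightarrow> real" where t: "\<forall>k. test_fun \<Omega> (a k) \<and> test_fun \<Omega> (b k)"
    and lim: "(\<lambda>k. (\<integral>x. (cmod (complex_of_real (a k x) + \<i> * complex_of_real (b k x) - u x))\<^sup>2 \<partial>lebesgue_on \<Omega>)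
          + (\<Sum>i\<in>UNIV. \<integral>x. (cmod (complex_of_real (pderiv i (a k) x)
                 + \<i> * complex_of_real (pderiv i (b k) x) - wgrad \<Omega> u x $ i))\<^sup>2 \<partial>lebesgue_on \<Omega>))
       \<longlonglongrightarrow> 0"
    using assms unfolding H10_def by blast
  define P where "P k = (\<integral>x. (cmod (TT (a k) (b k) x - u x))\<^sup>2 \<partial>lebesgue_on \<Omega>)" for k
  define Q where "Q i k = (\<integral>x. (cmod (dTT i (a k) (b k) x - wgrad \<Omega> u x $ i))\<^sup>2 \<partial>lebesgue_on \<Omega>)" for i k
  have lim': "(\<lambda>k. P k + (\<Sum>i\<in>UNIV. Q i k)) \<longlonglongrightarrow> 0"
    using lim unfolding P_def Q_def TT_def dTT_def .
  have Pn: "P k \<ge> 0" for k unfolding P_def by simp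
  have Qn: "Q i k \<ge> 0" for i k unfolding Q_def by simp
  have "P \<longlonglongrightarrow> 0"
  proof (rule Lim_null_comparison[OF _ lim'])
    show "\<forall>\<^sub>F k in sequentially. norm (P k) \<le> P k + (\<Sum>i\<in>UNIV. Q i k)"
      using Pn Qn by (simp add: sum_nonneg)
  qed
  moreover have "(Q i) \<longlonglongrightarrow> 0" for i
  proof (rule Lim_null_comparison[OF _ lim'])
    have "Q i k \<le> (\<Sum>i\<in>UNIV. Q i k)" for k
      by (rule member_le_sum) (use Qn in auto)
    then show "\<forall>\<^sub>F k in sequentially. norm (Q i k) \<le> P k + (\<Sum>i\<in>UNIV. Q i k)"
      using Pn Qn by (simp add: add_increasing)
  qed
  ultimately have "approx \<Omega> u (\<lambda>i x. wgrad \<Omega> u x $ i) a b"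
    unfolding approx_def P_def Q_def using t by blast
  then show ?thesis by blast
qed

lemma pderiv_diff:
  assumes "f differentiable (at x)" "g differentiable (at x)"
  shows "pderiv i (\<lambda>y. f y - g y) x = pderiv i f x - pderiv i g x"
proof -
  have d: "(\<lambda>y. (-1) * g y) differentiable (at x)" using assms(2) by (intro differentiable_mult differentiable_const)
  have "pderiv i (\<lambda>y. f y + (-1) * g y) x = pderiv i f x + pderiv i (\<lambda>y. (-1) * g y) x"
    by (rule pderiv_add[OF assms(1) d])
  also have "pderiv i (\<lambda>y. (-1) * g y) x = (-1) * pderiv i g x" by (rule pderiv_cmult[OF assms(2)])
  finally show ?thesis by simp
qed

lemma sq_diff_le: "(cmod ((a - b) - (c - d)))\<^sup>2 \<le> 2 * (cmod (a - c))\<^sup>2 + 2 * (cmod (b - d))\<^sup>2"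
proof -
  have "cmod ((a - b) - (c - d)) \<le> cmod (a - c) + cmod (b - d)"
    by (metis diff_diff_eq2 add_diff_eq diff_add_eq norm_triangle_ineq4 diff_diff_add add.commute)
  then have "(cmod ((a - b) - (c - d)))\<^sup>2 \<le> (cmod (a - c) + cmod (b - d))\<^sup>2" by (simp add: power_mono)
  also have "\<dots> \<le> 2 * (cmod (a - c))\<^sup>2 + 2 * (cmod (b - d))\<^sup>2"
    by (smt (verit) sum_squares_bound power2_sum)
  finally show ?thesis .
qed

lemma diff_conv:
  assumes "\<And>k. sqi M (F k)" "sqi M F0" "\<And>k. sqi M (G k)" "sqi M G0"
    "(\<lambda>k. \<integral>x. (cmod (F k x - F0 x))\<^sup>2 \<partial>M) \<longlonglongrightarrow> 0"
    "(\<lambda>k. \<integral>x. (cmod (G k x - G0 x))\<^sup>2 \<partial>M) \<longlonglongrightarrow> 0"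
  shows "(\<lambda>k. \<integral>x. (cmod ((F k x - G k x) - (F0 x - G0 x)))\<^sup>2 \<partial>M) \<longlonglongrightarrow> 0"
proof -
  have "(\<lambda>k. 2 * (\<integral>x. (cmod (F k x - F0 x))\<^sup>2 \<partial>M) + 2 * (\<integral>x. (cmod (G k x - G0 x))\<^sup>2 \<partial>M)) \<longlonglongrightarrow> 2 * 0 + 2 * 0"
    using assms(5,6) by (intro tendsto_intros)
  then have lim: "(\<lambda>k. 2 * (\<integral>x. (cmod (F k x - F0 x))\<^sup>2 \<partial>M) + 2 * (\<integral>x. (cmod (G k x - G0 x))\<^sup>2 \<partial>M)) \<longlonglongrightarrow> 0"
    by simp
  show ?thesis
  proof (rule Lim_null_comparison[OF _ lim], rule always_eventually, rule allI)
    fix k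
    have s1: "sqi M (\<lambda>x. F k x - F0 x)" "sqi M (\<lambda>x. G k x - G0 x)"
      using assms by (auto intro: sqi_diff)
    have s2: "sqi M (\<lambda>x. (F k x - G k x) - (F0 x - G0 x))"
      using assms by (auto intro!: sqi_diff)
    have "(\<integral>x. (cmod ((F k x - G k x) - (F0 x - G0 x)))\<^sup>2 \<partial>M)
        \<le> (\<integral>x. 2 * (cmod (F k x - F0 x))\<^sup>2 + 2 * (cmod (G k x - G0 x))\<^sup>2 \<partial>M)"
      by (rule integral_mono) (use s1 s2 sq_diff_le in \<open>auto simp: sqi_def\<close>)
    also have "\<dots> = 2 * (\<integral>x. (cmod (F k x - F0 x))\<^sup>2 \<partial>M) + 2 * (\<integral>x. (cmod (G k x - G0 x))\<^sup>2 \<partial>M)"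
      using s1 by (simp add: sqi_def)
    finally show "norm (\<integral>x. (cmod ((F k x - G k x) - (F0 x - G0 x)))\<^sup>2 \<partial>M)
        \<le> 2 * (\<integral>x. (cmod (F k x - F0 x))\<^sup>2 \<partial>M) + 2 * (\<integral>x. (cmod (G k x - G0 x))\<^sup>2 \<partial>M)"
      by simp
  qed
qed

lemma approx_diff:
  assumes "open \<Omega>" "approx \<Omega> u Gu a b" "approx \<Omega> v Gv c d"
    "sqi (lebesgue_on \<Omega>) u" "sqi (lebesgue_on \<Omega>) v"
    "\<And>i. sqi (lebesgue_on \<Omega>) (Gu i)" "\<And>i. sqi (lebesgue_on \<Omega>) (Gv i)"
  shows "approx \<Omega> (\<lambda>x. u x - v x) (\<lambda>i x. Gu i x - Gv i x) (\<lambda>k x. a k x - c k x) (\<lambda>k x. b k x - d k x)"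
proof -
  have ta: "test_fun \<Omega> (a k)" "test_fun \<Omega> (b k)" "test_fun \<Omega> (c k)" "test_fun \<Omega> (d k)" for k
    using assms(2,3) unfolding approx_def by auto
  have t: "\<forall>k. test_fun \<Omega> (\<lambda>x. a k x - c k x) \<and> test_fun \<Omega> (\<lambda>x. b k x - d k x)"
    using ta by (auto intro: test_fun_diff)
  have TTe: "TT (\<lambda>x. a k x - c k x) (\<lambda>x. b k x - d k x) x = TT (a k) (b k) x - TT (c k) (d k) x" for k x
    by (simp add: TT_def algebra_simps)
  have dif: "\<And>f x. test_fun \<Omega> f \<Longrightarrow> f differentiable (at x)"
    by (simp add: test_fun_def smooth_differentiable)
  have dTTe: "dTT i (\<lambda>x. a k x - c k x) (\<lambda>x. b k x - d k x) x = dTT i (a k) (b k) x - dTT i (c k) (d k) x" for i k x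
    by (simp add: dTT_def pderiv_diff[OF dif[OF ta(1)] dif[OF ta(3)]] pderiv_diff[OF dif[OF ta(2)] dif[OF ta(4)]] algebra_simps)
  have l1: "(\<lambda>k. \<integral>x. (cmod (TT (\<lambda>x. a k x - c k x) (\<lambda>x. b k x - d k x) x - (u x - v x)))\<^sup>2 \<partial>lebesgue_on \<Omega>) \<longlonglongrightarrow> 0"
    unfolding TTe
    by (rule diff_conv) (use assms ta in \<open>auto simp: approx_def intro: TT_sqi\<close>)
  have l2: "(\<lambda>k. \<integral>x. (cmod (dTT i (\<lambda>x. a k x - c k x) (\<lambda>x. b k x - d k x) x - (Gu i x - Gv i x)))\<^sup>2 \<partial>lebesgue_on \<Omega>) \<longlonglongrightarrow> 0" for i
    unfolding dTTe
    by (rule diff_conv) (use assms ta in \<open>auto simp: approx_def intro: dTT_sqi\<close>)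
  show ?thesis unfolding approx_def using t l1 l2 by blast
qed


lemma L2v_comp_sqi:
  assumes "L2v \<Omega> r"
  shows "sqi (lebesgue_on \<Omega>) (\<lambda>x. r x $ i)"
  unfolding sqi_def
proof
  show m: "(\<lambda>x. r x $ i) \<in> borel_measurable (lebesgue_on \<Omega>)"
    using assms unfolding L2v_def
    by (intro borel_measurable_continuous_on[where f="\<lambda>v. v $ i"] linear_continuous_on bounded_linear_vec_nth) auto
  show "integrable (lebesgue_on \<Omega>) (\<lambda>x. (cmod (r x $ i))\<^sup>2)"
  proof (rule Bochner_Integration.integrable_bound)
    show "integrable (lebesgue_on \<Omega>) (\<lambda>x. (norm (r x))\<^sup>2)" using assms by (simp add: L2v_def)
    show "(\<lambda>x. (cmod (r x $ i))\<^sup>2) \<in> borel_measurable (lebesgue_on \<Omega>)" using m by simp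
    show "AE x in lebesgue_on \<Omega>. norm ((cmod (r x $ i))\<^sup>2) \<le> norm ((norm (r x))\<^sup>2)"
    proof (rule AE_I2)
      fix x
      have "cmod (r x $ i) \<le> norm (r x)" by (rule Finite_Cartesian_Product.norm_nth_le)
      then show "norm ((cmod (r x $ i))\<^sup>2) \<le> norm ((norm (r x))\<^sup>2)" by (simp add: power_mono)
    qed
  qed
qed

lemma ibp_test:
  assumes O: "open \<Omega>" and ta: "test_fun \<Omega> a" and tb: "test_fun \<Omega> b"
    and r: "L2v \<Omega> r" and w: "L2 \<Omega> w" and wd: "weak_div \<Omega> r w"
  shows "(\<integral>x. w x * cnj (TT a b x) \<partial>lebesgue_on \<Omega>)
       = - (\<Sum>i\<in>UNIV. \<integral>x. r x $ i * cnj (dTT i a b x) \<partial>lebesgue_on \<Omega>)"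
proof -
  let ?M = "lebesgue_on \<Omega>"
  have ws: "sqi ?M w" using w by (simp add: L2_sqi)
  have rs: "\<And>i. sqi ?M (\<lambda>x. r x $ i)" using r by (rule L2v_comp_sqi)
  have wa: "(\<integral>x. (\<Sum>i\<in>UNIV. r x $ i * complex_of_real (pderiv i a x)) \<partial>?M) = - (\<integral>x. w x * complex_of_real (a x) \<partial>?M)"
    using wd ta unfolding weak_div_def by blast
  have wb: "(\<integral>x. (\<Sum>i\<in>UNIV. r x $ i * complex_of_real (pderiv i b x)) \<partial>?M) = - (\<integral>x. w x * complex_of_real (b x) \<partial>?M)"
    using wd tb unfolding weak_div_def by blast
  have i1: "integrable ?M (\<lambda>x. w x * complex_of_real (a x))" by (rule sqi_prod_int[OF ws test_sqi[OF O ta]])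
  have i2: "integrable ?M (\<lambda>x. w x * complex_of_real (b x))" by (rule sqi_prod_int[OF ws test_sqi[OF O tb]])
  have i3: "\<And>i. integrable ?M (\<lambda>x. r x $ i * complex_of_real (pderiv i a x))"
    by (rule sqi_prod_int[OF rs test_d_sqi[OF O ta]])
  have i4: "\<And>i. integrable ?M (\<lambda>x. r x $ i * complex_of_real (pderiv i b x))"
    by (rule sqi_prod_int[OF rs test_d_sqi[OF O tb]])
  have "(\<integral>x. w x * cnj (TT a b x) \<partial>?M) = (\<integral>x. w x * complex_of_real (a x) - \<i> * (w x * complex_of_real (b x)) \<partial>?M)"
    by (rule Bochner_Integration.integral_cong) (simp_all add: TT_def algebra_simps)
  also have "\<dots> = (\<integral>x. w x * complex_of_real (a x) \<partial>?M) - \<i> * (\<integral>x. w x * complex_of_real (b x) \<partial>?M)"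
    using i1 i2 by simp
  finally have L: "(\<integral>x. w x * cnj (TT a b x) \<partial>?M) = (\<integral>x. w x * complex_of_real (a x) \<partial>?M) - \<i> * (\<integral>x. w x * complex_of_real (b x) \<partial>?M)" .
  have "(\<Sum>i\<in>UNIV. \<integral>x. r x $ i * cnj (dTT i a b x) \<partial>?M)
      = (\<Sum>i\<in>UNIV. (\<integral>x. r x $ i * complex_of_real (pderiv i a x) \<partial>?M) - \<i> * (\<integral>x. r x $ i * complex_of_real (pderiv i b x) \<partial>?M))"
  proof (rule sum.cong[OF refl])
    fix i :: 'a
    have "(\<integral>x. r x $ i * cnj (dTT i a b x) \<partial>?M) = (\<integral>x. r x $ i * complex_of_real (pderiv i a x) - \<i> * (r x $ i * complex_of_real (pderiv i b x)) \<partial>?M)"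
      by (rule Bochner_Integration.integral_cong) (simp_all add: dTT_def algebra_simps)
    also have "\<dots> = (\<integral>x. r x $ i * complex_of_real (pderiv i a x) \<partial>?M) - \<i> * (\<integral>x. r x $ i * complex_of_real (pderiv i b x) \<partial>?M)"
      using i3 i4 by simp
    finally show "(\<integral>x. r x $ i * cnj (dTT i a b x) \<partial>?M) = (\<integral>x. r x $ i * complex_of_real (pderiv i a x) \<partial>?M) - \<i> * (\<integral>x. r x $ i * complex_of_real (pderiv i b x) \<partial>?M)" .
  qed
  also have "\<dots> = (\<Sum>i\<in>UNIV. \<integral>x. r x $ i * complex_of_real (pderiv i a x) \<partial>?M) - \<i> * (\<Sum>i\<in>UNIV. \<integral>x. r x $ i * complex_of_real (pderiv i b x) \<partial>?M)"
    by (simp add: sum_subtractf sum_distrib_left)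
  also have "\<dots> = (\<integral>x. (\<Sum>i\<in>UNIV. r x $ i * complex_of_real (pderiv i a x)) \<partial>?M) - \<i> * (\<integral>x. (\<Sum>i\<in>UNIV. r x $ i * complex_of_real (pderiv i b x)) \<partial>?M)"
    using i3 i4 by (simp add: integral_sum)
  also have "\<dots> = - (\<integral>x. w x * complex_of_real (a x) \<partial>?M) + \<i> * (\<integral>x. w x * complex_of_real (b x) \<partial>?M)"
    unfolding wa wb by simp
  finally show ?thesis unfolding L by simp
qed

lemma ibp_approx:
  assumes O: "open \<Omega>" and ap: "approx \<Omega> e G a b" and es: "sqi (lebesgue_on \<Omega>) e"
    and Gs: "\<And>i. sqi (lebesgue_on \<Omega>) (G i)"
    and r: "L2v \<Omega> r" and w: "L2 \<Omega> w" and wd: "weak_div \<Omega> r w"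
  shows "(\<integral>x. w x * cnj (e x) \<partial>lebesgue_on \<Omega>)
       = - (\<Sum>i\<in>UNIV. \<integral>x. r x $ i * cnj (G i x) \<partial>lebesgue_on \<Omega>)"
proof -
  let ?M = "lebesgue_on \<Omega>"
  have ws: "sqi ?M w" using w by (simp add: L2_sqi)
  have rs: "\<And>i. sqi ?M (\<lambda>x. r x $ i)" using r by (rule L2v_comp_sqi)
  have t: "test_fun \<Omega> (a k)" "test_fun \<Omega> (b k)" for k using ap unfolding approx_def by auto
  have eq: "(\<integral>x. w x * cnj (TT (a k) (b k) x) \<partial>?M) = - (\<Sum>i\<in>UNIV. \<integral>x. r x $ i * cnj (dTT i (a k) (b k) x) \<partial>?M)" for k
    by (rule ibp_test[OF O t(1) t(2) r w wd])
  have l1: "(\<lambda>k. \<integral>x. w x * cnj (TT (a k) (b k) x) \<partial>?M) \<longlonglongrightarrow> (\<integral>x. w x * cnj (e x) \<partial>?M)"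
    by (rule sqi_conv[OF ws ws TT_sqi[OF O t] es]) (use ap in \<open>simp_all add: approx_def\<close>)
  have l2: "(\<lambda>k. - (\<Sum>i\<in>UNIV. \<integral>x. r x $ i * cnj (dTT i (a k) (b k) x) \<partial>?M)) \<longlonglongrightarrow> - (\<Sum>i\<in>UNIV. \<integral>x. r x $ i * cnj (G i x) \<partial>?M)"
  proof (intro tendsto_minus tendsto_sum)
    fix i :: 'a
    show "(\<lambda>k. \<integral>x. r x $ i * cnj (dTT i (a k) (b k) x) \<partial>?M) \<longlonglongrightarrow> (\<integral>x. r x $ i * cnj (G i x) \<partial>?M)"
      by (rule sqi_conv[OF rs rs dTT_sqi[OF O t] Gs]) (use ap in \<open>simp_all add: approx_def\<close>)
  qed
  show ?thesis using LIMSEQ_unique[OF l1] l2 unfolding eq by blast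
qed


lemma Linf_sqi_mult:
  assumes "Linf \<Omega> m" "sqi (lebesgue_on \<Omega>) f"
  shows "sqi (lebesgue_on \<Omega>) (\<lambda>x. complex_of_real (m x) * f x)"
proof -
  obtain B where B: "AE x in lebesgue_on \<Omega>. norm (m x) \<le> B" using assms(1) unfolding Linf_def by blast
  have "(\<lambda>x. complex_of_real (m x)) \<in> borel_measurable (lebesgue_on \<Omega>)"
    using assms(1) unfolding Linf_def by (auto intro: measurable_compose[OF _ borel_measurable_of_real])
  moreover have "AE x in lebesgue_on \<Omega>. cmod (complex_of_real (m x)) \<le> B" using B by simp
  ultimately show ?thesis by (rule sqi_mult[OF assms(2)])
qed

lemma Linf_comp:
  assumes "Linf \<Omega> (b :: real^'n::finite \<Rightarrow> real^'m::finite)"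
  shows "Linf \<Omega> (\<lambda>x. b x $ i)"
proof -
  obtain B where B: "AE x in lebesgue_on \<Omega>. norm (b x) \<le> B" using assms unfolding Linf_def by blast
  have "(\<lambda>x. b x $ i) \<in> borel_measurable (lebesgue_on \<Omega>)"
    using assms unfolding Linf_def
    by (intro borel_measurable_continuous_on[where f="\<lambda>v. v $ i"] linear_continuous_on bounded_linear_vec_nth) auto
  moreover have "AE x in lebesgue_on \<Omega>. norm (b x $ i) \<le> B"
    using B
  proof (rule AE_mp, intro AE_I2 impI)
    fix x assume "norm (b x) \<le> B"
    then show "norm (b x $ i) \<le> B" using Finite_Cartesian_Product.norm_nth_le[of "b x" i] by linarith
  qed
  ultimately show ?thesis unfolding Linf_def by blast
qed

lemma Linf_conv_mult:
  assumes "Linf \<Omega> m" "\<And>k. sqi (lebesgue_on \<Omega>) (F k)" "sqi (lebesgue_on \<Omega>) F0"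
    "(\<lambda>k. \<integral>x. (cmod (F k x - F0 x))\<^sup>2 \<partial>lebesgue_on \<Omega>) \<longlonglongrightarrow> 0"
  shows "(\<lambda>k. \<integral>x. (cmod (complex_of_real (m x) * F k x - complex_of_real (m x) * F0 x))\<^sup>2 \<partial>lebesgue_on \<Omega>) \<longlonglongrightarrow> 0"
proof -
  obtain B where B: "AE x in lebesgue_on \<Omega>. norm (m x) \<le> B" using assms(1) unfolding Linf_def by blast
  have "(\<lambda>x. complex_of_real (m x)) \<in> borel_measurable (lebesgue_on \<Omega>)"
    using assms(1) unfolding Linf_def by (auto intro: measurable_compose[OF _ borel_measurable_of_real])
  moreover have "AE x in lebesgue_on \<Omega>. cmod (complex_of_real (m x)) \<le> B" using B by simp
  ultimately show ?thesis by (rule sqi_conv_mult[OF assms(2,3) _ _ assms(4)])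
qed

lemma b_test:
  assumes O: "open \<Omega>" and tp: "test_fun \<Omega> p" and tq: "test_fun \<Omega> q"
    and bL: "Linf \<Omega> b" and dL: "Linf \<Omega> divb"
    and wd: "weak_div \<Omega> (\<lambda>x. cvec (b x)) (\<lambda>x. complex_of_real (divb x))"
  shows "(\<Sum>i\<in>UNIV. (\<integral>x. (complex_of_real (b x $ i) * dTT i p q x) * cnj (TT p q x) \<partial>lebesgue_on \<Omega>)
             + (\<integral>x. TT p q x * cnj (complex_of_real (b x $ i) * dTT i p q x) \<partial>lebesgue_on \<Omega>))
       = - (\<integral>x. (complex_of_real (divb x) * TT p q x) * cnj (TT p q x) \<partial>lebesgue_on \<Omega>)"
proof -
  let ?M = "lebesgue_on \<Omega>"
  define h where "h x = p x * p x + q x * q x" for x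
  have th: "test_fun \<Omega> h" unfolding h_def using test_fun_sq[OF tp tq] .
  have dif: "\<And>f x. test_fun \<Omega> f \<Longrightarrow> f differentiable (at x)"
    by (simp add: test_fun_def smooth_differentiable)
  have dp: "\<And>x. p differentiable (at x)" and dq: "\<And>x. q differentiable (at x)" using dif tp tq by auto
  have ph: "pderiv i h x = 2 * (p x * pderiv i p x + q x * pderiv i q x)" for i x
  proof -
    have d1: "(\<lambda>x. p x * p x) differentiable (at x)" using dp by (intro differentiable_mult)
    have d2: "(\<lambda>x. q x * q x) differentiable (at x)" using dq by (intro differentiable_mult)
    have "pderiv i h x = pderiv i (\<lambda>x. p x * p x) x + pderiv i (\<lambda>x. q x * q x) x"
      unfolding h_def by (rule pderiv_add[OF d1 d2])
    also have "\<dots> = 2 * (p x * pderiv i p x + q x * pderiv i q x)"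
      by (simp add: pderiv_mult[OF dp dp] pderiv_mult[OF dq dq] algebra_simps)
    finally show ?thesis .
  qed
  have pw: "complex_of_real (pderiv i h x) = dTT i p q x * cnj (TT p q x) + TT p q x * cnj (dTT i p q x)" for i x
    unfolding ph TT_def dTT_def by (simp add: complex_eq_iff algebra_simps)
  have pw2: "complex_of_real (h x) = TT p q x * cnj (TT p q x)" for x
    unfolding h_def TT_def by (simp add: complex_eq_iff algebra_simps power2_eq_square)
  have wdh: "(\<integral>x. (\<Sum>i\<in>UNIV. cvec (b x) $ i * complex_of_real (pderiv i h x)) \<partial>?M)
      = - (\<integral>x. complex_of_real (divb x) * complex_of_real (h x) \<partial>?M)"
    using wd th unfolding weak_div_def by blast
  have Ts: "sqi ?M (TT p q)" by (rule TT_sqi[OF O tp tq])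
  have bi: "\<And>i. Linf \<Omega> (\<lambda>x. b x $ i)" using bL by (rule Linf_comp)
  have bdT: "\<And>i. sqi ?M (\<lambda>x. complex_of_real (b x $ i) * dTT i p q x)"
    by (rule Linf_sqi_mult[OF bi dTT_sqi[OF O tp tq]])
  have dT: "sqi ?M (\<lambda>x. complex_of_real (divb x) * TT p q x)" by (rule Linf_sqi_mult[OF dL Ts])
  have i1: "\<And>i. integrable ?M (\<lambda>x. (complex_of_real (b x $ i) * dTT i p q x) * cnj (TT p q x))"
    by (rule sqi_prod_int[OF bdT sqi_cnj[OF Ts]])
  have i2: "\<And>i. integrable ?M (\<lambda>x. TT p q x * cnj (complex_of_real (b x $ i) * dTT i p q x))"
    by (rule sqi_prod_int[OF Ts sqi_cnj[OF bdT]])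
  have "(\<Sum>i\<in>UNIV. (\<integral>x. (complex_of_real (b x $ i) * dTT i p q x) * cnj (TT p q x) \<partial>?M)
             + (\<integral>x. TT p q x * cnj (complex_of_real (b x $ i) * dTT i p q x) \<partial>?M))
      = (\<Sum>i\<in>UNIV. (\<integral>x. (complex_of_real (b x $ i) * dTT i p q x) * cnj (TT p q x)
             + TT p q x * cnj (complex_of_real (b x $ i) * dTT i p q x) \<partial>?M))"
    using i1 i2 by simp
  also have "\<dots> = (\<integral>x. (\<Sum>i\<in>UNIV. (complex_of_real (b x $ i) * dTT i p q x) * cnj (TT p q x)
             + TT p q x * cnj (complex_of_real (b x $ i) * dTT i p q x)) \<partial>?M)"
    using i1 i2 by (simp add: integral_sum)
  also have "\<dots> = (\<integral>x. (\<Sum>i\<in>UNIV. cvec (b x) $ i * complex_of_real (pderiv i h x)) \<partial>?M)"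
    by (rule Bochner_Integration.integral_cong[OF refl], rule sum.cong[OF refl])
       (simp add: cvec_def pw algebra_simps)
  also have "\<dots> = - (\<integral>x. complex_of_real (divb x) * complex_of_real (h x) \<partial>?M)" by (rule wdh)
  also have "\<dots> = - (\<integral>x. (complex_of_real (divb x) * TT p q x) * cnj (TT p q x) \<partial>?M)"
    by (simp add: pw2 mult.assoc)
  finally show ?thesis .
qed

lemma b_approx:
  assumes O: "open \<Omega>" and ap: "approx \<Omega> e G p q" and es: "sqi (lebesgue_on \<Omega>) e"
    and Gs: "\<And>i. sqi (lebesgue_on \<Omega>) (G i)"
    and bL: "Linf \<Omega> b" and dL: "Linf \<Omega> divb"
    and wd: "weak_div \<Omega> (\<lambda>x. cvec (b x)) (\<lambda>x. complex_of_real (divb x))"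
  shows "(\<Sum>i\<in>UNIV. (\<integral>x. (complex_of_real (b x $ i) * G i x) * cnj (e x) \<partial>lebesgue_on \<Omega>)
             + (\<integral>x. e x * cnj (complex_of_real (b x $ i) * G i x) \<partial>lebesgue_on \<Omega>))
       = - (\<integral>x. (complex_of_real (divb x) * e x) * cnj (e x) \<partial>lebesgue_on \<Omega>)"
proof -
  let ?M = "lebesgue_on \<Omega>"
  have t: "test_fun \<Omega> (p k)" "test_fun \<Omega> (q k)" for k using ap unfolding approx_def by auto
  have Ts: "\<And>k. sqi ?M (TT (p k) (q k))" by (rule TT_sqi[OF O t])
  have cT: "(\<lambda>k. \<integral>x. (cmod (TT (p k) (q k) x - e x))\<^sup>2 \<partial>?M) \<longlonglongrightarrow> 0" using ap by (simp add: approx_def)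
  have cG: "\<And>i. (\<lambda>k. \<integral>x. (cmod (dTT i (p k) (q k) x - G i x))\<^sup>2 \<partial>?M) \<longlonglongrightarrow> 0" using ap by (simp add: approx_def)
  have bi: "\<And>i. Linf \<Omega> (\<lambda>x. b x $ i)" using bL by (rule Linf_comp)
  have bdT: "\<And>i k. sqi ?M (\<lambda>x. complex_of_real (b x $ i) * dTT i (p k) (q k) x)"
    by (rule Linf_sqi_mult[OF bi dTT_sqi[OF O t]])
  have bG: "\<And>i. sqi ?M (\<lambda>x. complex_of_real (b x $ i) * G i x)" by (rule Linf_sqi_mult[OF bi Gs])
  have cbG: "\<And>i. (\<lambda>k. \<integral>x. (cmod (complex_of_real (b x $ i) * dTT i (p k) (q k) x - complex_of_real (b x $ i) * G i x))\<^sup>2 \<partial>?M) \<longlonglongrightarrow> 0"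
    by (rule Linf_conv_mult[OF bi dTT_sqi[OF O t] Gs cG])
  have dT: "\<And>k. sqi ?M (\<lambda>x. complex_of_real (divb x) * TT (p k) (q k) x)" by (rule Linf_sqi_mult[OF dL Ts])
  have de: "sqi ?M (\<lambda>x. complex_of_real (divb x) * e x)" by (rule Linf_sqi_mult[OF dL es])
  have cdT: "(\<lambda>k. \<integral>x. (cmod (complex_of_real (divb x) * TT (p k) (q k) x - complex_of_real (divb x) * e x))\<^sup>2 \<partial>?M) \<longlonglongrightarrow> 0"
    by (rule Linf_conv_mult[OF dL Ts es cT])
  have eq: "\<And>k. (\<Sum>i\<in>UNIV. (\<integral>x. (complex_of_real (b x $ i) * dTT i (p k) (q k) x) * cnj (TT (p k) (q k) x) \<partial>?M)
             + (\<integral>x. TT (p k) (q k) x * cnj (complex_of_real (b x $ i) * dTT i (p k) (q k) x) \<partial>?M))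
       = - (\<integral>x. (complex_of_real (divb x) * TT (p k) (q k) x) * cnj (TT (p k) (q k) x) \<partial>?M)"
    by (rule b_test[OF O t bL dL wd])
  have l1: "(\<lambda>k. \<Sum>i\<in>UNIV. (\<integral>x. (complex_of_real (b x $ i) * dTT i (p k) (q k) x) * cnj (TT (p k) (q k) x) \<partial>?M)
             + (\<integral>x. TT (p k) (q k) x * cnj (complex_of_real (b x $ i) * dTT i (p k) (q k) x) \<partial>?M))
      \<longlonglongrightarrow> (\<Sum>i\<in>UNIV. (\<integral>x. (complex_of_real (b x $ i) * G i x) * cnj (e x) \<partial>?M)
             + (\<integral>x. e x * cnj (complex_of_real (b x $ i) * G i x) \<partial>?M))"
  proof (intro tendsto_sum tendsto_add)
    fix i :: 'a
    show "(\<lambda>k. \<integral>x. (complex_of_real (b x $ i) * dTT i (p k) (q k) x) * cnj (TT (p k) (q k) x) \<partial>?M)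
        \<longlonglongrightarrow> (\<integral>x. (complex_of_real (b x $ i) * G i x) * cnj (e x) \<partial>?M)"
      by (rule sqi_conv[OF bdT bG Ts es cbG cT])
    show "(\<lambda>k. \<integral>x. TT (p k) (q k) x * cnj (complex_of_real (b x $ i) * dTT i (p k) (q k) x) \<partial>?M)
        \<longlonglongrightarrow> (\<integral>x. e x * cnj (complex_of_real (b x $ i) * G i x) \<partial>?M)"
      by (rule sqi_conv[OF Ts es bdT bG cT cbG])
  qed
  have l2: "(\<lambda>k. - (\<integral>x. (complex_of_real (divb x) * TT (p k) (q k) x) * cnj (TT (p k) (q k) x) \<partial>?M))
      \<longlonglongrightarrow> - (\<integral>x. (complex_of_real (divb x) * e x) * cnj (e x) \<partial>?M)"
    by (intro tendsto_minus sqi_conv[OF dT de Ts es cdT cT])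
  show ?thesis using LIMSEQ_unique[OF l1] l2 unfolding eq by blast
qed


lemma norm_sq_vec: "(norm (v::complex^'n::finite))\<^sup>2 = (\<Sum>i\<in>UNIV. (cmod (v $ i))\<^sup>2)"
  unfolding norm_vec_def L2_set_def by (simp add: sum_nonneg)

lemma cdot_add_left: "cdot (u + w) v = cdot u v + cdot w v"
  by (simp add: cdot_def distrib_right sum.distrib)
lemma cdot_diff_left: "cdot (u - w) v = cdot u v - cdot w v"
  by (simp add: cdot_def left_diff_distrib sum_subtractf)
lemma cdot_add_right: "cdot u (v + w) = cdot u v + cdot u w"
  by (simp add: cdot_def distrib_left sum.distrib)
lemma cdot_diff_right: "cdot u (v - w) = cdot u v - cdot u w"
  by (simp add: cdot_def right_diff_distrib sum_subtractf)
lemma cdot_scale_left: "cdot (c *s u) v = c * cdot u v"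
  by (simp add: cdot_def sum_distrib_left mult.assoc)
lemma cdot_scale_right: "cdot u (c *s v) = cnj c * cdot u v"
  by (simp add: cdot_def sum_distrib_left algebra_simps)
lemma cdot_zero_left: "cdot 0 v = 0" by (simp add: cdot_def)
lemma cdot_cnj: "cdot v u = cnj (cdot u v)"
  by (simp add: cdot_def mult.commute)
lemma cdot_self: "cdot v v = complex_of_real ((norm v)\<^sup>2)"
  unfolding norm_sq_vec cdot_def of_real_sum
  by (rule sum.cong[OF refl]) (rule complex_norm_square[symmetric])
lemma Re_cdot_self: "Re (cdot v v) = (norm v)\<^sup>2"
  by (simp add: cdot_self)

definition herm :: "complex^'n^'n \<Rightarrow> bool" where
  "herm A \<longleftrightarrow> (\<forall>i j. A $ i $ j = cnj (A $ j $ i))"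

lemma cdot_herm:
  assumes "herm A"
  shows "cdot (A *v u) v = cdot u (A *v v)"
proof -
  have "cdot (A *v u) v = (\<Sum>i\<in>UNIV. \<Sum>j\<in>UNIV. A $ i $ j * u $ j * cnj (v $ i))"
    by (simp add: cdot_def matrix_vector_mult_def sum_distrib_right)
  also have "\<dots> = (\<Sum>j\<in>UNIV. \<Sum>i\<in>UNIV. A $ i $ j * u $ j * cnj (v $ i))" by (rule sum.swap)
  also have "\<dots> = (\<Sum>j\<in>UNIV. \<Sum>i\<in>UNIV. u $ j * (cnj (A $ j $ i) * cnj (v $ i)))"
  proof (intro sum.cong refl)
    fix j i
    have "A $ i $ j = cnj (A $ j $ i)" using assms unfolding herm_def by blast
    then show "A $ i $ j * u $ j * cnj (v $ i) = u $ j * (cnj (A $ j $ i) * cnj (v $ i))" by simp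
  qed
  also have "\<dots> = cdot u (A *v v)"
    unfolding cdot_def matrix_vector_mult_def by (simp add: sum_distrib_left)
  finally show ?thesis .
qed

definition coerc :: "real \<Rightarrow> complex^'n^'n \<Rightarrow> bool" where
  "coerc \<alpha> A \<longleftrightarrow> (\<forall>v. \<alpha> * (norm v)\<^sup>2 \<le> Re (cdot (A *v v) v))"

lemma coerc_inj:
  assumes "coerc \<alpha> A" "\<alpha> > 0"
  shows "inj ((*v) A)"
proof (rule injI)
  fix u w assume "A *v u = A *v w"
  then have "A *v (u - w) = 0" by (simp add: matrix_vector_mult_diff_distrib)
  then have "\<alpha> * (norm (u - w))\<^sup>2 \<le> 0" using assms(1) unfolding coerc_def
    by (metis cdot_zero_left zero_complex.simps(1))
  then have "norm (u - w) = 0" using assms(2)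
    by (simp add: mult_le_0_iff)
  then show "u = w" by simp
qed

lemma coerc_invertible:
  assumes "coerc \<alpha> A" "\<alpha> > 0"
  shows "A ** matrix_inv A = mat 1"
proof -
  have "det (matrix ((*v) A)) \<noteq> 0"
    using det_nz_iff_inj_gen[OF matrix_vector_mul_linear_gen] coerc_inj[OF assms] by blast
  then have "invertible A" by (simp add: invertible_det_nz)
  then have "\<exists>A'. A ** A' = mat 1 \<and> A' ** A = mat 1" by (simp add: invertible_def)
  then have "A ** matrix_inv A = mat 1 \<and> matrix_inv A ** A = mat 1"
    unfolding matrix_inv_def by (rule someI_ex)
  then show ?thesis by blast
qed

lemma coerc_inv_apply:
  assumes "coerc \<alpha> A" "\<alpha> > 0"
  shows "A *v (matrix_inv A *v y) = y"
  by (simp add: matrix_vector_mul_assoc coerc_invertible[OF assms])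

lemma coerc_det: "coerc \<alpha> A \<Longrightarrow> \<alpha> > 0 \<Longrightarrow> det A \<noteq> 0"
  using det_nz_iff_inj_gen[OF matrix_vector_mul_linear_gen] coerc_inj by fastforce

lemma cdot_Re_le: "Re (cdot y Y) \<le> (\<Sum>i\<in>UNIV. cmod (y $ i) * cmod (Y $ i))"
proof -
  have "Re (cdot y Y) \<le> cmod (cdot y Y)" by (rule complex_Re_le_cmod)
  also have "\<dots> \<le> (\<Sum>i\<in>UNIV. cmod (y $ i * cnj (Y $ i)))" unfolding cdot_def by (rule norm_sum)
  finally show ?thesis by (simp add: norm_mult)
qed

lemma coerc_inv_bound:
  assumes "coerc \<alpha> A" "\<alpha> > 0"
  shows "(norm (matrix_inv A *v y))\<^sup>2 \<le> (norm y)\<^sup>2 / \<alpha>\<^sup>2"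
proof -
  define Y where "Y = matrix_inv A *v y"
  have AY: "A *v Y = y" unfolding Y_def by (rule coerc_inv_apply[OF assms])
  have "\<alpha> * (norm Y)\<^sup>2 \<le> Re (cdot y Y)" using assms(1) AY unfolding coerc_def by metis
  also have "\<dots> \<le> (\<Sum>i\<in>UNIV. cmod (y $ i) * cmod (Y $ i))" by (rule cdot_Re_le)
  also have "\<dots> \<le> (\<Sum>i\<in>UNIV. (cmod (y $ i))\<^sup>2 / (2 * \<alpha>) + \<alpha> * (cmod (Y $ i))\<^sup>2 / 2)"
  proof (rule sum_mono)
    fix i
    have "0 \<le> (cmod (y $ i) / sqrt (2 * \<alpha>) - sqrt (\<alpha> / 2) * cmod (Y $ i))\<^sup>2" by simp
    also have "\<dots> = (cmod (y $ i))\<^sup>2 / (2 * \<alpha>) + \<alpha> * (cmod (Y $ i))\<^sup>2 / 2 - cmod (y $ i) * cmod (Y $ i)"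
    proof -
      have "sqrt (2 * \<alpha>) * sqrt (\<alpha> / 2) = \<alpha>" using assms(2)
        by (simp add: real_sqrt_mult[symmetric])
      then show ?thesis using assms(2)
        by (simp add: power2_diff power_divide power_mult_distrib field_simps power2_eq_square)
    qed
    finally show "cmod (y $ i) * cmod (Y $ i) \<le> (cmod (y $ i))\<^sup>2 / (2 * \<alpha>) + \<alpha> * (cmod (Y $ i))\<^sup>2 / 2"
      by simp
  qed
  also have "\<dots> = (norm y)\<^sup>2 / (2 * \<alpha>) + \<alpha> * (norm Y)\<^sup>2 / 2"
    by (simp add: norm_sq_vec sum.distrib sum_divide_distrib sum_distrib_left)
  finally have "\<alpha> * (norm Y)\<^sup>2 \<le> (norm y)\<^sup>2 / (2 * \<alpha>) + \<alpha> * (norm Y)\<^sup>2 / 2" .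
  then have "\<alpha> * (norm Y)\<^sup>2 / 2 \<le> (norm y)\<^sup>2 / (2 * \<alpha>)" by simp
  then show ?thesis using assms(2) unfolding Y_def[symmetric]
    by (simp add: field_simps power2_eq_square)
qed

lemma key_matrix_ineq:
  assumes "coerc \<alpha> A" "\<alpha> > 0" "herm A"
  shows "4 * Re (cdot r g) \<le> Re (cdot (matrix_inv A *v (r + A *v g)) (r + A *v g))"
proof -
  define R where "R = r + A *v g"
  define Y where "Y = matrix_inv A *v R"
  have AY: "A *v Y = R" unfolding Y_def by (rule coerc_inv_apply[OF assms(1,2)])
  define z where "z = Y - 2 *s g"
  have "0 \<le> \<alpha> * (norm z)\<^sup>2" using assms(2) by simp
  also have "\<dots> \<le> Re (cdot (A *v z) z)" using assms(1) unfolding coerc_def by blast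
  also have "A *v z = R - 2 *s (A *v g)"
    unfolding z_def by (simp add: matrix_vector_mult_diff_distrib AY vector_scalar_commute)
  finally have 0: "0 \<le> Re (cdot (R - 2 *s (A *v g)) (Y - 2 *s g))" unfolding z_def .
  have e1: "cdot (A *v g) Y = cdot g R" using cdot_herm[OF assms(3)] AY by metis
  have e2: "Re (cdot R Y) = Re (cdot Y R)"
  proof -
    have "cdot R Y = cdot (A *v Y) Y" using AY by simp
    moreover have "cdot Y R = cnj (cdot R Y)" by (rule cdot_cnj)
    ultimately show ?thesis by simp
  qed
  have e3: "Re (cdot g R) = Re (cdot R g)" by (simp add: cdot_cnj[of g R])
  have eR: "cdot R g = cdot r g + cdot (A *v g) g" unfolding R_def by (rule cdot_add_left)
  have "cdot (R - 2 *s (A *v g)) (Y - 2 *s g)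
      = cdot R Y - 2 * cdot R g - 2 * cdot (A *v g) Y + 4 * cdot (A *v g) g"
    by (simp add: cdot_diff_left cdot_diff_right cdot_scale_left cdot_scale_right algebra_simps)
  then have "Re (cdot (R - 2 *s (A *v g)) (Y - 2 *s g))
      = Re (cdot Y R) - 4 * Re (cdot R g) + 4 * Re (cdot (A *v g) g)"
    using e1 e2 e3 by simp
  then show ?thesis using 0 eR unfolding Y_def R_def by simp
qed


lemma integral_Re_swap: "integrable M f \<Longrightarrow> (\<integral>x. Re (f x) \<partial>M) = Re (\<integral>x. f x \<partial>M)"
  by (rule integral_bounded_linear[OF bounded_linear_Re])

lemma quad_meas:
  assumes "\<And>i j. (\<lambda>x. A x $ i $ j) \<in> borel_measurable M"
    "\<And>i. (\<lambda>x. V x $ i) \<in> borel_measurable M" "\<And>i. (\<lambda>x. W x $ i) \<in> borel_measurable M"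
  shows "(\<lambda>x. cdot (A x *v V x) (W x) :: complex) \<in> borel_measurable M"
proof -
  have r: "\<And>i. (\<lambda>x. (A x *v V x) $ i) \<in> borel_measurable M"
    unfolding matrix_vector_mult_def vec_lambda_beta
    by (intro borel_measurable_sum borel_measurable_times assms)
  show ?thesis unfolding cdot_def
    by (intro borel_measurable_sum borel_measurable_times r
         borel_measurable_continuous_on[OF continuous_on_cnj[OF continuous_on_id]] assms)
qed

lemma Linf_entries_bound:
  assumes "\<forall>i j. Linf \<Omega> (\<lambda>x. A x $ i $ j :: complex)"
  shows "\<exists>B. AE x in lebesgue_on \<Omega>. \<forall>i j. cmod (A x $ i $ j) \<le> B i j"
proof -
  have "\<forall>i j. \<exists>b. AE x in lebesgue_on \<Omega>. cmod (A x $ i $ j) \<le> b"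
    using assms unfolding Linf_def by blast
  then obtain B where B: "\<And>i j. AE x in lebesgue_on \<Omega>. cmod (A x $ i $ j) \<le> B i j" by metis
  have "AE x in lebesgue_on \<Omega>. \<forall>i. \<forall>j. cmod (A x $ i $ j) \<le> B i j"
    unfolding AE_all_countable using B by blast
  then show ?thesis by blast
qed

lemma quad_bound:
  assumes "AE x in M. \<forall>i j. cmod (A x $ i $ j) \<le> B i j"
  shows "AE x in M. cmod (cdot (A x *v v) v) \<le> (\<Sum>i\<in>UNIV. \<Sum>j\<in>UNIV. B i j * cmod (v $ j) * cmod (v $ i))"
  using assms
proof (rule AE_mp, intro AE_I2 impI)
  fix x assume b: "\<forall>i j. cmod (A x $ i $ j) \<le> B i j"
  have "cmod (cdot (A x *v v) v) = cmod (\<Sum>i\<in>UNIV. \<Sum>j\<in>UNIV. A x $ i $ j * v $ j * cnj (v $ i))"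
    by (simp add: cdot_def matrix_vector_mult_def sum_distrib_right)
  also have "\<dots> \<le> (\<Sum>i\<in>UNIV. cmod (\<Sum>j\<in>UNIV. A x $ i $ j * v $ j * cnj (v $ i)))" by (rule norm_sum)
  also have "\<dots> \<le> (\<Sum>i\<in>UNIV. \<Sum>j\<in>UNIV. cmod (A x $ i $ j * v $ j * cnj (v $ i)))"
    by (intro sum_mono norm_sum)
  also have "\<dots> \<le> (\<Sum>i\<in>UNIV. \<Sum>j\<in>UNIV. B i j * cmod (v $ j) * cmod (v $ i))"
    by (intro sum_mono) (simp add: norm_mult mult_right_mono b)
  finally show "cmod (cdot (A x *v v) v) \<le> (\<Sum>i\<in>UNIV. \<Sum>j\<in>UNIV. B i j * cmod (v $ j) * cmod (v $ i))" .
qed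

lemma coerc_one:
  fixes \<Omega> :: "(real^'n::finite) set" and A :: "real^'n \<Rightarrow> complex^'n^'n"
  assumes O: "open \<Omega>"
    and A_meas: "\<forall>i j. Linf \<Omega> (\<lambda>x. A x $ i $ j)"
    and A_coerc: "\<forall>\<phi>. L2v \<Omega> \<phi> \<longrightarrow>
          \<alpha> * (\<integral>x. (norm (\<phi> x))\<^sup>2 \<partial>lebesgue_on \<Omega>)
            \<le> Re (\<integral>x. cdot (A x *v \<phi> x) (\<phi> x) \<partial>lebesgue_on \<Omega>)"
  shows "AE x in lebesgue_on \<Omega>. \<alpha> * (norm v)\<^sup>2 \<le> Re (cdot (A x *v v) v)"
proof -
  let ?M = "lebesgue_on \<Omega>"
  have Ol: "\<Omega> \<in> sets lebesgue" by (rule open_lebesgue[OF O])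
  have Am: "\<And>i j. (\<lambda>x. A x $ i $ j) \<in> borel_measurable ?M" using A_meas unfolding Linf_def by blast
  define q where "q x = Re (cdot (A x *v v) v) - \<alpha> * (norm v)\<^sup>2" for x
  have qm0: "(\<lambda>x. cdot (A x *v v) v) \<in> borel_measurable ?M"
    using quad_meas[of A ?M "\<lambda>_. v" "\<lambda>_. v"] Am by simp
  have qm: "q \<in> borel_measurable ?M" unfolding q_def
    using qm0 by (intro borel_measurable_diff borel_measurable_Re) simp_all
  obtain B where B: "AE x in ?M. \<forall>i j. cmod (A x $ i $ j) \<le> B i j"
    using Linf_entries_bound[OF A_meas] by blast
  define C where "C = (\<Sum>i\<in>UNIV. \<Sum>j\<in>UNIV. B i j * cmod (v $ j) * cmod (v $ i))"
  have qb: "AE x in ?M. cmod (cdot (A x *v v) v) \<le> C" unfolding C_def by (rule quad_bound[OF B])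
  have "AE x in ?M. x \<in> cball 0 (real n) \<longrightarrow> 0 \<le> q x" for n :: nat
  proof -
    define S where "S = {x \<in> \<Omega>. q x < 0} \<inter> cball 0 (real n)"
    have cb: "cball (0::real^'n) (real n) \<in> sets lebesgue"
      by (metis borel_closed closed_cball sets_completionI_sets sets_lborel)
    have Ssets: "S \<in> sets ?M"
    proof -
      have "{x \<in> space ?M. q x < 0} \<in> sets ?M" using qm by measurable
      moreover have "cball 0 (real n) \<inter> space ?M \<in> sets ?M"
        using Ol cb by (simp add: sets_restrict_space_iff sets.Int)
      ultimately have "{x \<in> space ?M. q x < 0} \<inter> (cball 0 (real n) \<inter> space ?M) \<in> sets ?M" by blast
      moreover have "{x \<in> space ?M. q x < 0} \<inter> (cball 0 (real n) \<inter> space ?M) = S"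
        using Ol by (auto simp: S_def)
      ultimately show ?thesis by simp
    qed
    have Ssub: "S \<subseteq> \<Omega>" by (auto simp: S_def)
    have Sfin: "emeasure ?M S < \<infinity>"
    proof -
      have "emeasure ?M S = emeasure lebesgue S"
        using Ol Ssub by (intro emeasure_restrict_space) simp_all
      also have "\<dots> \<le> emeasure lebesgue (cball (0::real^'n) (real n))"
      proof (rule emeasure_mono)
        show "S \<subseteq> cball 0 (real n)" by (auto simp: S_def)
        show "cball (0::real^'n) (real n) \<in> sets lebesgue" by (rule cb)
      qed
      also have "\<dots> < \<infinity>" using lmeasurable_cball unfolding fmeasurable_def by blast
      finally show ?thesis .
    qed
    have indint: "integrable ?M (indicator S :: _ \<Rightarrow> real)" using Ssets Sfin by (rule integrable_real_indicator)
    define \<phi> where "\<phi> x = indicator S x *\<^sub>R v" for x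
    have phim: "\<phi> \<in> borel_measurable ?M" unfolding \<phi>_def
      using Ssets by (intro borel_measurable_scaleR borel_measurable_indicator) simp_all
    have n\<phi>: "(norm (\<phi> x))\<^sup>2 = indicator S x * (norm v)\<^sup>2" for x
      by (simp add: \<phi>_def indicator_def)
    have L2: "L2v \<Omega> \<phi>" unfolding L2v_def n\<phi> using phim indint by simp
    have cq: "cdot (A x *v \<phi> x) (\<phi> x) = complex_of_real (indicator S x) * cdot (A x *v v) v" for x
      by (simp add: \<phi>_def indicator_def cdot_def)
    have qi: "integrable ?M (\<lambda>x. indicator S x * q x)"
    proof (rule Bochner_Integration.integrable_bound)
      show "integrable ?M (\<lambda>x. indicator S x * (C + \<bar>\<alpha>\<bar> * (norm v)\<^sup>2))" using indint by simp
      show "(\<lambda>x. indicator S x * q x) \<in> borel_measurable ?M"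
        using qm Ssets by (intro borel_measurable_times borel_measurable_indicator) simp_all
      show "AE x in ?M. norm (indicator S x * q x) \<le> norm (indicator S x * (C + \<bar>\<alpha>\<bar> * (norm v)\<^sup>2))"
        using qb
      proof (rule AE_mp, intro AE_I2 impI)
        fix x assume c: "cmod (cdot (A x *v v) v) \<le> C"
        have "\<bar>q x\<bar> \<le> C + \<bar>\<alpha>\<bar> * (norm v)\<^sup>2"
        proof -
          have "\<bar>Re (cdot (A x *v v) v)\<bar> \<le> C" using abs_Re_le_cmod c by (rule order_trans)
          moreover have "\<bar>\<alpha> * (norm v)\<^sup>2\<bar> = \<bar>\<alpha>\<bar> * (norm v)\<^sup>2" by (simp add: abs_mult)
          ultimately show ?thesis unfolding q_def by linarith
        qed
        moreover have "0 \<le> C" using c norm_ge_zero by (rule order_trans[rotated])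
        ultimately show "norm (indicator S x * q x) \<le> norm (indicator S x * (C + \<bar>\<alpha>\<bar> * (norm v)\<^sup>2))"
          by (simp add: indicator_def)
      qed
    qed
    have ci: "integrable ?M (\<lambda>x. cdot (A x *v \<phi> x) (\<phi> x))"
    proof -
      have "integrable ?M (\<lambda>x. complex_of_real (indicator S x * q x + indicator S x * (\<alpha> * (norm v)\<^sup>2)))"
        using qi indint by (intro integrable_of_real integrable_add) simp_all
      moreover have "integrable ?M (\<lambda>x. complex_of_real (indicator S x) * cdot (A x *v v) v)"
      proof (rule Bochner_Integration.integrable_bound)
        show "integrable ?M (\<lambda>x. indicator S x * C)" using indint by simp
        show "(\<lambda>x. complex_of_real (indicator S x) * cdot (A x *v v) v) \<in> borel_measurable ?M"
          using Ssets by (intro borel_measurable_times measurable_compose[OF _ borel_measurable_of_real] borel_measurable_indicator qm0) simp_all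
        show "AE x in ?M. norm (complex_of_real (indicator S x) * cdot (A x *v v) v) \<le> norm (indicator S x * C)"
          using qb
        proof (rule AE_mp, intro AE_I2 impI)
          fix x assume c: "cmod (cdot (A x *v v) v) \<le> C"
          moreover have "0 \<le> C" using c norm_ge_zero by (rule order_trans[rotated])
          ultimately show "norm (complex_of_real (indicator S x) * cdot (A x *v v) v) \<le> norm (indicator S x * C)"
            by (simp add: indicator_def)
        qed
      qed
      ultimately show ?thesis unfolding cq by blast
    qed
    have "\<alpha> * (\<integral>x. (norm (\<phi> x))\<^sup>2 \<partial>?M) \<le> Re (\<integral>x. cdot (A x *v \<phi> x) (\<phi> x) \<partial>?M)"
      using A_coerc L2 by blast
    also have "\<dots> = (\<integral>x. Re (cdot (A x *v \<phi> x) (\<phi> x)) \<partial>?M)"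
      by (rule integral_Re_swap[OF ci, symmetric])
    also have "\<dots> = (\<integral>x. indicator S x * q x + \<alpha> * (indicator S x * (norm v)\<^sup>2) \<partial>?M)"
      by (rule Bochner_Integration.integral_cong[OF refl]) (simp add: cq q_def indicator_def)
    also have "\<dots> = (\<integral>x. indicator S x * q x \<partial>?M) + \<alpha> * (\<integral>x. (norm (\<phi> x))\<^sup>2 \<partial>?M)"
      using qi indint by (simp add: n\<phi>)
    finally have ge: "0 \<le> (\<integral>x. indicator S x * q x \<partial>?M)" by simp
    have le: "\<And>x. indicator S x * q x \<le> 0" by (simp add: indicator_def S_def)
    have "(\<integral>x. - (indicator S x * q x) \<partial>?M) = 0"
    proof -
      have "(\<integral>x. - (indicator S x * q x) \<partial>?M) \<ge> 0" by (rule integral_nonneg_AE, rule AE_I2) (use le in \<open>simp add: le_minus_iff\<close>)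
      moreover have "(\<integral>x. - (indicator S x * q x) \<partial>?M) = - (\<integral>x. indicator S x * q x \<partial>?M)" by simp
      ultimately show ?thesis using ge by linarith
    qed
    then have "AE x in ?M. - (indicator S x * q x) = 0"
      using integral_nonneg_eq_0_iff_AE[of ?M "\<lambda>x. - (indicator S x * q x)"] qi le by simp
    then show ?thesis
    proof (rule AE_mp, intro AE_I2 impI)
      fix x assume "- (indicator S x * q x) = 0" "x \<in> space ?M" "x \<in> cball 0 (real n)"
      then show "0 \<le> q x" using Ol by (auto simp: S_def indicator_def split: if_splits)
    qed
  qed
  then have "\<forall>n::nat. AE x in ?M. x \<in> cball 0 (real n) \<longrightarrow> 0 \<le> q x" by blast
  then have "AE x in ?M. \<forall>n::nat. x \<in> cball 0 (real n) \<longrightarrow> 0 \<le> q x" by (subst AE_all_countable) assumption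
  then show ?thesis
  proof (rule AE_mp, intro AE_I2 impI)
    fix x assume h: "\<forall>n::nat. x \<in> cball 0 (real n) \<longrightarrow> 0 \<le> q x"
    obtain n :: nat where "norm x \<le> real n" using real_arch_simple by blast
    then have "x \<in> cball 0 (real n)" by (simp add: dist_norm)
    then show "\<alpha> * (norm v)\<^sup>2 \<le> Re (cdot (A x *v v) v)" using h unfolding q_def by force
  qed
qed


lemma coerc_AE:
  fixes \<Omega> :: "(real^'n::finite) set" and A :: "real^'n \<Rightarrow> complex^'n^'n"
  assumes O: "open \<Omega>"
    and A_meas: "\<forall>i j. Linf \<Omega> (\<lambda>x. A x $ i $ j)"
    and A_coerc: "\<forall>\<phi>. L2v \<Omega> \<phi> \<longrightarrow>
          \<alpha> * (\<integral>x. (norm (\<phi> x))\<^sup>2 \<partial>lebesgue_on \<Omega>)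
            \<le> Re (\<integral>x. cdot (A x *v \<phi> x) (\<phi> x) \<partial>lebesgue_on \<Omega>)"
  shows "AE x in lebesgue_on \<Omega>. coerc \<alpha> (A x)"
proof -
  obtain D :: "(complex^'n) set" where D: "countable D" "\<And>U. open U \<Longrightarrow> U \<noteq> {} \<Longrightarrow> \<exists>y\<in>D. y \<in> U"
    using countable_dense_exists by blast
  have "AE x in lebesgue_on \<Omega>. \<forall>v\<in>D. \<alpha> * (norm v)\<^sup>2 \<le> Re (cdot (A x *v v) v)"
    using D(1) by (subst AE_ball_countable) (auto intro: coerc_one[OF O A_meas A_coerc])
  then show ?thesis
  proof (rule AE_mp, intro AE_I2 impI)
    fix x assume h: "\<forall>v\<in>D. \<alpha> * (norm v)\<^sup>2 \<le> Re (cdot (A x *v v) v)"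
    show "coerc \<alpha> (A x)" unfolding coerc_def
    proof (rule allI, rule ccontr)
      fix v assume nv: "\<not> \<alpha> * (norm v)\<^sup>2 \<le> Re (cdot (A x *v v) v)"
      define U where "U = {w. Re (cdot (A x *v w) w) < \<alpha> * (norm w)\<^sup>2}"
      have "open U" unfolding U_def cdot_def
        by (intro open_Collect_less continuous_intros)
      moreover have "v \<in> U" using nv by (simp add: U_def)
      ultimately obtain y where "y \<in> D" "y \<in> U" using D(2) by blast
      then show False using h by (auto simp: U_def)
    qed
  qed
qed


lemma det_meas:
  assumes "\<And>i j. (\<lambda>x. F x $ i $ j) \<in> borel_measurable M"
  shows "(\<lambda>x. det (F x) :: complex) \<in> borel_measurable M"
  unfolding det_def
  by (intro borel_measurable_sum borel_measurable_times borel_measurable_prod assms borel_measurable_const)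

lemma AE_meas_lebesgue:
  fixes f g :: "real^'n::finite \<Rightarrow> complex"
  assumes O: "\<Omega> \<in> sets lebesgue" and g: "g \<in> borel_measurable (lebesgue_on \<Omega>)"
    and ae: "AE x in lebesgue_on \<Omega>. f x = g x"
  shows "f \<in> borel_measurable (lebesgue_on \<Omega>)"
proof -
  have gm: "g measurable_on \<Omega>" using g measurable_on_iff_borel_measurable[OF O] by blast
  obtain N where N: "{x \<in> space (lebesgue_on \<Omega>). \<not> f x = g x} \<subseteq> N" "emeasure (lebesgue_on \<Omega>) N = 0"
      "N \<in> sets (lebesgue_on \<Omega>)"
    using ae by (rule AE_E)
  have O': "\<Omega> \<inter> space lebesgue \<in> sets lebesgue" using O by simp
  have NO: "N \<subseteq> \<Omega>" using N(3) O by (simp add: sets_restrict_space_iff)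
  have Nl: "N \<in> sets lebesgue" using N(3) O by (simp add: sets_restrict_space_iff)
  have "emeasure lebesgue N = 0" using N(2) emeasure_restrict_space[OF O' NO] by simp
  then have "N \<in> null_sets lebesgue" using Nl by blast
  then have neg: "negligible N" by (simp add: negligible_iff_null_sets)
  have "f measurable_on \<Omega>"
  proof (rule measurable_on_spike[OF gm neg])
    fix x assume "x \<in> \<Omega> - N"
    then show "f x = g x" using N(1) O by auto
  qed
  then show ?thesis using measurable_on_iff_borel_measurable[OF O] by blast
qed

lemma cramer_comp:
  assumes "coerc \<alpha> A" "\<alpha> > 0"
  shows "(matrix_inv A *v y) $ k = det (\<chi> i j. if j = k then y $ i else A $ i $ j) / det A"
proof -
  have "A *v (matrix_inv A *v y) = y" by (rule coerc_inv_apply[OF assms])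
  then have "matrix_inv A *v y = (\<chi> k. det (\<chi> i j. if j = k then y $ i else A $ i $ j) / det A)"
    using cramer[OF coerc_det[OF assms]] by blast
  then show ?thesis by simp
qed

lemma inv_integrable:
  fixes A :: "real^'m::finite \<Rightarrow> complex^'n::finite^'n" and \<Omega> :: "(real^'m) set" and M
  defines "M \<equiv> lebesgue_on \<Omega>"
  assumes O: "\<Omega> \<in> sets lebesgue"
  assumes co: "AE x in M. coerc \<alpha> (A x)" and ap: "\<alpha> > 0"
    and Am: "\<And>i j. (\<lambda>x. A x $ i $ j) \<in> borel_measurable M"
    and R: "\<And>i. sqi M (\<lambda>x. R x $ i)"
  shows "integrable M (\<lambda>x. cdot (matrix_inv (A x) *v R x) (R x))"
proof -
  define Y where "Y k x = det (\<chi> i j. if j = k then R x $ i else A x $ i $ j) / det (A x)" for k x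
  have Ym: "(Y k) \<in> borel_measurable M" for k
  proof -
    have "(\<lambda>x. det (\<chi> i j. if j = k then R x $ i else A x $ i $ j)) \<in> borel_measurable M"
    proof (rule det_meas)
      fix i j
      show "(\<lambda>x. (\<chi> i j. if j = k then R x $ i else A x $ i $ j) $ i $ j) \<in> borel_measurable M"
        by (cases "j = k") (simp_all add: Am sqi_meas[OF R])
    qed
    moreover have "(\<lambda>x. det (A x)) \<in> borel_measurable M" by (rule det_meas[OF Am])
    ultimately show ?thesis unfolding Y_def by (rule borel_measurable_divide)
  qed
  have Yeq: "AE x in M. \<forall>k. (matrix_inv (A x) *v R x) $ k = Y k x"
    using co by (rule AE_mp) (auto simp: Y_def cramer_comp[OF _ ap])
  have Rint: "integrable M (\<lambda>x. \<Sum>j\<in>UNIV. (cmod (R x $ j))\<^sup>2)"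
    using R by (auto simp: sqi_def)
  have Ys: "sqi M (Y k)" for k
    unfolding sqi_def
  proof
    show "Y k \<in> borel_measurable M" by (rule Ym)
    show "integrable M (\<lambda>x. (cmod (Y k x))\<^sup>2)"
    proof (rule Bochner_Integration.integrable_bound)
      show "integrable M (\<lambda>x. (\<Sum>j\<in>UNIV. (cmod (R x $ j))\<^sup>2) / \<alpha>\<^sup>2)" using Rint by simp
      show "(\<lambda>x. (cmod (Y k x))\<^sup>2) \<in> borel_measurable M" using Ym by simp
      show "AE x in M. norm ((cmod (Y k x))\<^sup>2) \<le> norm ((\<Sum>j\<in>UNIV. (cmod (R x $ j))\<^sup>2) / \<alpha>\<^sup>2)"
        using co Yeq
      proof (eventually_elim)
        case (elim x)
        have "(cmod (Y k x))\<^sup>2 = (cmod ((matrix_inv (A x) *v R x) $ k))\<^sup>2" using elim(2) by simp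
        also have "\<dots> \<le> (norm (matrix_inv (A x) *v R x))\<^sup>2"
          by (simp add: power_mono Finite_Cartesian_Product.norm_nth_le)
        also have "\<dots> \<le> (norm (R x))\<^sup>2 / \<alpha>\<^sup>2" by (rule coerc_inv_bound[OF elim(1) ap])
        finally show ?case by (simp add: norm_sq_vec sum_nonneg)
      qed
    qed
  qed
  have "integrable M (\<lambda>x. \<Sum>k\<in>UNIV. Y k x * cnj (R x $ k))"
    by (rule Bochner_Integration.integrable_sum, rule sqi_prod_int[OF Ys sqi_cnj[OF R]])
  moreover have "AE x in M. (\<Sum>k\<in>UNIV. Y k x * cnj (R x $ k)) = cdot (matrix_inv (A x) *v R x) (R x)"
    using Yeq by (rule AE_mp) (auto simp: cdot_def)
  moreover have "(\<lambda>x. cdot (matrix_inv (A x) *v R x) (R x)) \<in> borel_measurable M"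
    unfolding M_def
  proof (rule AE_meas_lebesgue[OF O])
    show "(\<lambda>x. \<Sum>k\<in>UNIV. Y k x * cnj (R x $ k)) \<in> borel_measurable (lebesgue_on \<Omega>)"
      using \<open>integrable M (\<lambda>x. \<Sum>k\<in>UNIV. Y k x * cnj (R x $ k))\<close> unfolding M_def by (rule borel_measurable_integrable)
    show "AE x in lebesgue_on \<Omega>. cdot (matrix_inv (A x) *v R x) (R x) = (\<Sum>k\<in>UNIV. Y k x * cnj (R x $ k))"
      using \<open>AE x in M. (\<Sum>k\<in>UNIV. Y k x * cnj (R x $ k)) = cdot (matrix_inv (A x) *v R x) (R x)\<close>
      unfolding M_def by (rule AE_mp) auto
  qed
  ultimately show ?thesis using integrable_cong_AE_imp by blast
qed


lemma scalar_ineq: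
  assumes "c > 0"
  shows "4 * Re (w * cnj e) \<le> inverse c * (cmod (complex_of_real c * e + w))\<^sup>2"
proof -
  have "4 * c * Re (w * cnj e) \<le> (cmod (complex_of_real c * e + w))\<^sup>2"
  proof -
    have "(cmod (complex_of_real c * e + w))\<^sup>2 - 4 * c * Re (w * cnj e)
        = (c * Re e - Re w)\<^sup>2 + (c * Im e - Im w)\<^sup>2"
      unfolding cmod_power2 by (simp add: power2_eq_square algebra_simps)
    moreover have "0 \<le> (c * Re e - Re w)\<^sup>2 + (c * Im e - Im w)\<^sup>2" by simp
    ultimately show ?thesis by linarith
  qed
  then show ?thesis using assms by (simp add: field_simps)
qed

lemma Hdiv_wdiv: "Hdiv \<Omega> q \<Longrightarrow> L2 \<Omega> (wdiv \<Omega> q) \<and> weak_div \<Omega> q (wdiv \<Omega> q)"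
  unfolding Hdiv_def wdiv_def by (metis (mono_tags, lifting) someI_ex)

lemma Linf_sqi_cmult:
  assumes "Linf \<Omega> (m :: _ \<Rightarrow> complex)" "sqi (lebesgue_on \<Omega>) g"
  shows "sqi (lebesgue_on \<Omega>) (\<lambda>x. m x * g x)"
proof -
  obtain B where "AE x in lebesgue_on \<Omega>. norm (m x) \<le> B" using assms(1) unfolding Linf_def by blast
  moreover have "m \<in> borel_measurable (lebesgue_on \<Omega>)" using assms(1) unfolding Linf_def by blast
  ultimately show ?thesis using sqi_mult[OF assms(2)] by simp
qed

lemma mv_sqi:
  assumes "\<forall>i j. Linf \<Omega> (\<lambda>x. A x $ i $ j)" "\<And>j. sqi (lebesgue_on \<Omega>) (\<lambda>x. V x $ j)"
  shows "sqi (lebesgue_on \<Omega>) (\<lambda>x. (A x *v V x) $ i)"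
  unfolding matrix_vector_mult_def vec_lambda_beta
  by (intro sqi_sum Linf_sqi_cmult) (use assms in auto)


lemma fin_arith:
  fixes B D R W S :: real
  shows "2 * B = W \<Longrightarrow> 4 * B + 4 * D + 4 * R \<le> S \<Longrightarrow> D + R = 0 \<Longrightarrow> W \<le> 1/2 * S"
  by linarith

theorem mainTheorem14:
  fixes \<Omega> :: "(real^'n::finite) set"
    and A :: "real^'n \<Rightarrow> complex^'n^'n"
    and b :: "real^'n \<Rightarrow> real^'n"
    and divb :: "real^'n \<Rightarrow> real"
    and c :: "real^'n \<Rightarrow> real"
    and f u ut :: "real^'n \<Rightarrow> complex"
    and p :: "real^'n \<Rightarrow> complex^'n"
    and \<alpha> \<beta> c0 b0 :: real
  assumes "open \<Omega>"
    and A_meas: "\<forall>i j. Linf \<Omega> (\<lambda>x. A x $ i $ j)"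
    and A_herm: "AE x in lebesgue_on \<Omega>. \<forall>i j. A x $ i $ j = cnj (A x $ j $ i)"
    and "0 < \<alpha>" and "\<alpha> \<le> \<beta>"
    and A_coerc: "\<forall>\<phi>. L2v \<Omega> \<phi> \<longrightarrow>
          \<alpha> * (\<integral>x. (norm (\<phi> x))\<^sup>2 \<partial>lebesgue_on \<Omega>)
            \<le> Re (\<integral>x. cdot (A x *v \<phi> x) (\<phi> x) \<partial>lebesgue_on \<Omega>)
          \<and> Re (\<integral>x. cdot (A x *v \<phi> x) (\<phi> x) \<partial>lebesgue_on \<Omega>)
            \<le> \<beta> * (\<integral>x. (norm (\<phi> x))\<^sup>2 \<partial>lebesgue_on \<Omega>)"
    and b_Linf: "Linf \<Omega> b"
    and divb_Linf: "Linf \<Omega> divb"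
    and divb_div: "weak_div \<Omega> (\<lambda>x. cvec (b x)) (\<lambda>x. complex_of_real (divb x))"
    and c_Linf: "Linf \<Omega> c"
    and f_L2: "L2 \<Omega> f"
    and "0 < c0" and c_ge: "AE x in lebesgue_on \<Omega>. c0 \<le> c x"
    and "0 < b0" and divb_le: "AE x in lebesgue_on \<Omega>. b0 \<le> - divb x"
    and sol: "solves_P1 \<Omega> A b c f u p"
    and ut: "H10 \<Omega> ut"
  shows "\<forall>\<phi>. Hdiv \<Omega> \<phi> \<longrightarrow>
     wnorm2 \<Omega> (\<lambda>x. - divb x) (\<lambda>x. u x - ut x)
       \<le> 1/2 * (wnorm2 \<Omega> (\<lambda>x. inverse (c x))
                   (\<lambda>x. f x - complex_of_real (c x) * ut x - cdot (wgrad \<Omega> ut x) (cvec (b x))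
                        + wdiv \<Omega> \<phi> x)
               + wnorm2M \<Omega> (\<lambda>x. matrix_inv (A x)) (\<lambda>x. \<phi> x - A x *v wgrad \<Omega> ut x))"
proof (intro allI impI)
  fix \<phi> assume h\<phi>: "Hdiv \<Omega> \<phi>"
  let ?M = "lebesgue_on \<Omega>"
  have O: "open \<Omega>" by fact
  have Ol: "\<Omega> \<in> sets lebesgue" by (rule open_lebesgue[OF O])
  have uH: "H10 \<Omega> u" and pH: "Hdiv \<Omega> p" and pA: "AE x in ?M. p x = A x *v wgrad \<Omega> u x"
    and peq: "AE x in ?M. - wdiv \<Omega> p x + cdot (wgrad \<Omega> u x) (cvec (b x)) + complex_of_real (c x) * u x = f x"
    using sol unfolding solves_P1_def by auto
  have uS: "sqi ?M u" using uH by (simp add: H10_def H1_def L2_sqi)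
  have tS: "sqi ?M ut" using ut by (simp add: H10_def H1_def L2_sqi)
  have guS: "\<And>i. sqi ?M (\<lambda>x. wgrad \<Omega> u x $ i)" using uH by (simp add: H10_def wgrad_sqi)
  have gtS: "\<And>i. sqi ?M (\<lambda>x. wgrad \<Omega> ut x $ i)" using ut by (simp add: H10_def wgrad_sqi)
  obtain a1 b1 where ap1: "approx \<Omega> u (\<lambda>i x. wgrad \<Omega> u x $ i) a1 b1" using H10_approx[OF uH] by blast
  obtain a2 b2 where ap2: "approx \<Omega> ut (\<lambda>i x. wgrad \<Omega> ut x $ i) a2 b2" using H10_approx[OF ut] by blast
  define e where "e x = u x - ut x" for x
  define G where "G i x = wgrad \<Omega> u x $ i - wgrad \<Omega> ut x $ i" for i x
  have apE: "approx \<Omega> e G (\<lambda>k x. a1 k x - a2 k x) (\<lambda>k x. b1 k x - b2 k x)"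
    unfolding e_def[abs_def] G_def[abs_def] by (rule approx_diff[OF O ap1 ap2 uS tS guS gtS])
  have eS: "sqi ?M e" unfolding e_def by (rule sqi_diff[OF uS tS])
  have GS: "\<And>i. sqi ?M (G i)" unfolding G_def by (rule sqi_diff[OF guS gtS])
  have \<phi>w: "L2 \<Omega> (wdiv \<Omega> \<phi>)" "weak_div \<Omega> \<phi> (wdiv \<Omega> \<phi>)" using Hdiv_wdiv[OF h\<phi>] by auto
  have pw: "L2 \<Omega> (wdiv \<Omega> p)" "weak_div \<Omega> p (wdiv \<Omega> p)" using Hdiv_wdiv[OF pH] by auto
  have \<phi>L: "L2v \<Omega> \<phi>" using h\<phi> by (simp add: Hdiv_def)
  have pL: "L2v \<Omega> p" using pH by (simp add: Hdiv_def)
  have \<phi>S: "\<And>i. sqi ?M (\<lambda>x. \<phi> x $ i)" by (rule L2v_comp_sqi[OF \<phi>L])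
  have pS: "\<And>i. sqi ?M (\<lambda>x. p x $ i)" by (rule L2v_comp_sqi[OF pL])
  have w\<phi>S: "sqi ?M (wdiv \<Omega> \<phi>)" using \<phi>w by (simp add: L2_sqi)
  have wpS: "sqi ?M (wdiv \<Omega> p)" using pw by (simp add: L2_sqi)
  have ibp\<phi>: "(\<integral>x. wdiv \<Omega> \<phi> x * cnj (e x) \<partial>?M) = - (\<Sum>i\<in>UNIV. \<integral>x. \<phi> x $ i * cnj (G i x) \<partial>?M)"
    by (rule ibp_approx[OF O apE eS GS \<phi>L \<phi>w])
  have ibpp: "(\<integral>x. wdiv \<Omega> p x * cnj (e x) \<partial>?M) = - (\<Sum>i\<in>UNIV. \<integral>x. p x $ i * cnj (G i x) \<partial>?M)"
    by (rule ibp_approx[OF O apE eS GS pL pw])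
  have bid: "(\<Sum>i\<in>UNIV. (\<integral>x. (complex_of_real (b x $ i) * G i x) * cnj (e x) \<partial>?M)
             + (\<integral>x. e x * cnj (complex_of_real (b x $ i) * G i x) \<partial>?M))
       = - (\<integral>x. (complex_of_real (divb x) * e x) * cnj (e x) \<partial>?M)"
    by (rule b_approx[OF O apE eS GS b_Linf divb_Linf divb_div])
  have coAE: "AE x in ?M. coerc \<alpha> (A x)"
    by (rule coerc_AE[OF O A_meas]) (use A_coerc in blast)
  have hAE: "AE x in ?M. herm (A x)" using A_herm unfolding herm_def .
  have ap: "\<alpha> > 0" by fact
  have Am: "\<And>i j. (\<lambda>x. A x $ i $ j) \<in> borel_measurable ?M" using A_meas unfolding Linf_def by blast
  have bi: "\<And>i. Linf \<Omega> (\<lambda>x. b x $ i)" using b_Linf by (rule Linf_comp)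
  define beta where "beta x = (\<Sum>i\<in>UNIV. complex_of_real (b x $ i) * G i x)" for x
  define d where "d x = wdiv \<Omega> \<phi> x - wdiv \<Omega> p x" for x
  define rg where "rg x = (\<Sum>i\<in>UNIV. (\<phi> x $ i - p x $ i) * cnj (G i x))" for x
  define R1 where "R1 x = f x - complex_of_real (c x) * ut x - cdot (wgrad \<Omega> ut x) (cvec (b x)) + wdiv \<Omega> \<phi> x" for x
  define R2 where "R2 x = \<phi> x - A x *v wgrad \<Omega> ut x" for x
  define Q where "Q x = Re (cdot (matrix_inv (A x) *v R2 x) (R2 x))" for x
  have pointwise: "AE x in ?M. 4 * Re (beta x * cnj (e x)) + 4 * Re (d x * cnj (e x)) + 4 * Re (rg x)
       \<le> inverse (c x) * (cmod (R1 x))\<^sup>2 + Q x"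
    using c_ge coAE hAE pA peq
  proof (eventually_elim)
    case (elim x)
    have cp: "c x > 0" using elim(1) \<open>0 < c0\<close> by linarith
    define gv where "gv = wgrad \<Omega> u x - wgrad \<Omega> ut x"
    have gvi: "gv $ i = G i x" for i by (simp add: gv_def G_def)
    have cd: "cdot (wgrad \<Omega> u x) (cvec (b x)) - cdot (wgrad \<Omega> ut x) (cvec (b x)) = beta x"
      by (simp add: cdot_def cvec_def beta_def G_def sum_subtractf[symmetric] algebra_simps)
    have cu: "cdot (wgrad \<Omega> u x) (cvec (b x)) = beta x + cdot (wgrad \<Omega> ut x) (cvec (b x))"
      using cd by (simp add: diff_eq_eq add.commute)
    have fx: "f x = - wdiv \<Omega> p x + (beta x + cdot (wgrad \<Omega> ut x) (cvec (b x))) + complex_of_real (c x) * u x"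
      using elim(5) unfolding cu by simp
    have R1e: "R1 x = complex_of_real (c x) * e x + (beta x + d x)"
      unfolding R1_def e_def d_def fx by (simp add: algebra_simps)
    have R2e: "R2 x = (\<phi> x - p x) + A x *v gv"
      unfolding R2_def gv_def using elim(4) by (simp add: matrix_vector_mult_diff_distrib)
    have rge: "cdot (\<phi> x - p x) gv = rg x" by (simp add: cdot_def rg_def gvi)
    have i1: "4 * Re ((beta x + d x) * cnj (e x)) \<le> inverse (c x) * (cmod (R1 x))\<^sup>2"
      unfolding R1e by (rule scalar_ineq[OF cp])
    have i2: "4 * Re (rg x) \<le> Q x"
      unfolding Q_def R2e rge[symmetric] by (rule key_matrix_ineq[OF elim(2) ap elim(3)])
    show ?case using i1 i2 by (simp add: distrib_right)
  qed
  have betaS: "sqi ?M beta" unfolding beta_def[abs_def]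
    by (intro sqi_sum Linf_sqi_mult[OF bi GS]) simp
  have dS: "sqi ?M d" unfolding d_def[abs_def] by (rule sqi_diff[OF w\<phi>S wpS])
  have rgI: "\<And>i. integrable ?M (\<lambda>x. (\<phi> x $ i - p x $ i) * cnj (G i x))"
    by (rule sqi_prod_int[OF sqi_diff[OF \<phi>S pS] sqi_cnj[OF GS]])
  have rgint: "integrable ?M rg" unfolding rg_def[abs_def] by (rule Bochner_Integration.integrable_sum, rule rgI)
  have I1: "integrable ?M (\<lambda>x. beta x * cnj (e x))" by (rule sqi_prod_int[OF betaS sqi_cnj[OF eS]])
  have I2: "integrable ?M (\<lambda>x. d x * cnj (e x))" by (rule sqi_prod_int[OF dS sqi_cnj[OF eS]])
  have cbS: "sqi ?M (\<lambda>x. cdot (wgrad \<Omega> ut x) (cvec (b x)))"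
  proof -
    have "sqi ?M (\<lambda>x. \<Sum>i\<in>UNIV. complex_of_real (b x $ i) * wgrad \<Omega> ut x $ i)"
      by (intro sqi_sum Linf_sqi_mult[OF bi gtS]) simp
    then show ?thesis by (simp add: cdot_def cvec_def mult.commute)
  qed
  have R1S: "sqi ?M R1" unfolding R1_def[abs_def]
    by (intro sqi_add sqi_diff Linf_sqi_mult[OF c_Linf tS] cbS w\<phi>S) (use f_L2 in \<open>simp add: L2_sqi\<close>)
  have cm: "c \<in> borel_measurable ?M" using c_Linf unfolding Linf_def by blast
  have J1: "integrable ?M (\<lambda>x. inverse (c x) * (cmod (R1 x))\<^sup>2)"
  proof (rule Bochner_Integration.integrable_bound)
    show "integrable ?M (\<lambda>x. inverse c0 * (cmod (R1 x))\<^sup>2)" using R1S by (simp add: sqi_def)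
    show "(\<lambda>x. inverse (c x) * (cmod (R1 x))\<^sup>2) \<in> borel_measurable ?M"
    proof -
      have "R1 \<in> borel_measurable ?M" using R1S by (rule sqi_meas)
      then have "(\<lambda>x. cmod (R1 x)) \<in> borel_measurable ?M" by (rule measurable_compose[OF _ borel_measurable_norm])
      then show ?thesis using cm by (intro borel_measurable_times borel_measurable_inverse borel_measurable_power)
    qed
    show "AE x in ?M. norm (inverse (c x) * (cmod (R1 x))\<^sup>2) \<le> norm (inverse c0 * (cmod (R1 x))\<^sup>2)"
      using c_ge
    proof (eventually_elim)
      case (elim x)
      have "inverse (c x) \<le> inverse c0" using elim \<open>0 < c0\<close> by (simp add: le_imp_inverse_le)
      moreover have "0 < inverse (c x)" using elim \<open>0 < c0\<close> by simp
      ultimately show ?case using \<open>0 < c0\<close> by (simp add: abs_mult mult_right_mono)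
    qed
  qed
  have R2S: "\<And>i. sqi ?M (\<lambda>x. R2 x $ i)"
    unfolding R2_def by (simp, intro sqi_diff \<phi>S mv_sqi[OF A_meas gtS])
  have J2c: "integrable ?M (\<lambda>x. cdot (matrix_inv (A x) *v R2 x) (R2 x))"
    by (rule inv_integrable[OF Ol coAE ap Am R2S])
  have J2: "integrable ?M Q" unfolding Q_def[abs_def] using J2c by (rule integrable_Re)
  have LI1: "integrable ?M (\<lambda>x. 4 * Re (beta x * cnj (e x)))" using I1 by (intro integrable_mult_right integrable_Re)
  have LI2: "integrable ?M (\<lambda>x. 4 * Re (d x * cnj (e x)))" using I2 by (intro integrable_mult_right integrable_Re)
  have LI3: "integrable ?M (\<lambda>x. 4 * Re (rg x))" using rgint by (intro integrable_mult_right integrable_Re)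
  have LI: "integrable ?M (\<lambda>x. 4 * Re (beta x * cnj (e x)) + 4 * Re (d x * cnj (e x)) + 4 * Re (rg x))"
    by (rule Bochner_Integration.integrable_add[OF Bochner_Integration.integrable_add[OF LI1 LI2] LI3])
  have "(\<integral>x. 4 * Re (beta x * cnj (e x)) + 4 * Re (d x * cnj (e x)) + 4 * Re (rg x) \<partial>?M)
      \<le> (\<integral>x. inverse (c x) * (cmod (R1 x))\<^sup>2 + Q x \<partial>?M)"
    by (rule integral_mono_AE[OF LI Bochner_Integration.integrable_add[OF J1 J2] pointwise])
  also have "(\<integral>x. inverse (c x) * (cmod (R1 x))\<^sup>2 + Q x \<partial>?M)
      = wnorm2 \<Omega> (\<lambda>x. inverse (c x))
                   (\<lambda>x. f x - complex_of_real (c x) * ut x - cdot (wgrad \<Omega> ut x) (cvec (b x))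
                        + wdiv \<Omega> \<phi> x)
               + wnorm2M \<Omega> (\<lambda>x. matrix_inv (A x)) (\<lambda>x. \<phi> x - A x *v wgrad \<Omega> ut x)"
  proof -
    have s1: "(\<integral>x. inverse (c x) * (cmod (R1 x))\<^sup>2 + Q x \<partial>?M)
        = (\<integral>x. inverse (c x) * (cmod (R1 x))\<^sup>2 \<partial>?M) + (\<integral>x. Q x \<partial>?M)"
      by (rule Bochner_Integration.integral_add[OF J1 J2])
    have s2: "(\<integral>x. Q x \<partial>?M) = Re (\<integral>x. cdot (matrix_inv (A x) *v R2 x) (R2 x) \<partial>?M)"
      unfolding Q_def by (rule integral_Re_swap[OF J2c])
    show ?thesis unfolding s1 s2 unfolding wnorm2_def wnorm2M_def R1_def R2_def by (rule refl)
  qed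
  also have "(\<integral>x. 4 * Re (beta x * cnj (e x)) + 4 * Re (d x * cnj (e x)) + 4 * Re (rg x) \<partial>?M)
      = 4 * Re (\<integral>x. beta x * cnj (e x) \<partial>?M) + 4 * Re (\<integral>x. d x * cnj (e x) \<partial>?M) + 4 * Re (\<integral>x. rg x \<partial>?M)"
  proof -
    have "(\<integral>x. 4 * Re (beta x * cnj (e x)) + 4 * Re (d x * cnj (e x)) + 4 * Re (rg x) \<partial>?M)
       = (\<integral>x. 4 * Re (beta x * cnj (e x)) \<partial>?M) + (\<integral>x. 4 * Re (d x * cnj (e x)) \<partial>?M) + (\<integral>x. 4 * Re (rg x) \<partial>?M)"
      by (simp only: Bochner_Integration.integral_add[OF Bochner_Integration.integrable_add[OF LI1 LI2] LI3] Bochner_Integration.integral_add[OF LI1 LI2])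
    also have "\<dots> = 4 * Re (\<integral>x. beta x * cnj (e x) \<partial>?M) + 4 * Re (\<integral>x. d x * cnj (e x) \<partial>?M) + 4 * Re (\<integral>x. rg x \<partial>?M)"
      by (simp only: integral_mult_right_zero integral_Re_swap[OF I1] integral_Re_swap[OF I2] integral_Re_swap[OF rgint])
    finally show ?thesis .
  qed
  finally have main: "4 * Re (\<integral>x. beta x * cnj (e x) \<partial>?M) + 4 * Re (\<integral>x. d x * cnj (e x) \<partial>?M) + 4 * Re (\<integral>x. rg x \<partial>?M)
      \<le> wnorm2 \<Omega> (\<lambda>x. inverse (c x))
                   (\<lambda>x. f x - complex_of_real (c x) * ut x - cdot (wgrad \<Omega> ut x) (cvec (b x))
                        + wdiv \<Omega> \<phi> x)
               + wnorm2M \<Omega> (\<lambda>x. matrix_inv (A x)) (\<lambda>x. \<phi> x - A x *v wgrad \<Omega> ut x)" .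
  have dint: "(\<integral>x. d x * cnj (e x) \<partial>?M) = - (\<Sum>i\<in>UNIV. \<integral>x. \<phi> x $ i * cnj (G i x) \<partial>?M) + (\<Sum>i\<in>UNIV. \<integral>x. p x $ i * cnj (G i x) \<partial>?M)"
  proof -
    have "(\<integral>x. d x * cnj (e x) \<partial>?M) = (\<integral>x. wdiv \<Omega> \<phi> x * cnj (e x) - wdiv \<Omega> p x * cnj (e x) \<partial>?M)"
      by (simp add: d_def algebra_simps)
    also have "\<dots> = (\<integral>x. wdiv \<Omega> \<phi> x * cnj (e x) \<partial>?M) - (\<integral>x. wdiv \<Omega> p x * cnj (e x) \<partial>?M)"
      by (rule Bochner_Integration.integral_diff) (rule sqi_prod_int[OF w\<phi>S sqi_cnj[OF eS]], rule sqi_prod_int[OF wpS sqi_cnj[OF eS]])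
    finally show ?thesis unfolding ibp\<phi> ibpp by simp
  qed
  have rgi: "(\<integral>x. rg x \<partial>?M) = (\<Sum>i\<in>UNIV. \<integral>x. \<phi> x $ i * cnj (G i x) \<partial>?M) - (\<Sum>i\<in>UNIV. \<integral>x. p x $ i * cnj (G i x) \<partial>?M)"
  proof -
    have "(\<integral>x. rg x \<partial>?M) = (\<Sum>i\<in>UNIV. \<integral>x. (\<phi> x $ i - p x $ i) * cnj (G i x) \<partial>?M)"
      unfolding rg_def by (rule Bochner_Integration.integral_sum, rule rgI)
    also have "\<dots> = (\<Sum>i\<in>UNIV. (\<integral>x. \<phi> x $ i * cnj (G i x) \<partial>?M) - (\<integral>x. p x $ i * cnj (G i x) \<partial>?M))"
    proof (rule sum.cong[OF refl])
      fix i
      have "(\<integral>x. (\<phi> x $ i - p x $ i) * cnj (G i x) \<partial>?M) = (\<integral>x. \<phi> x $ i * cnj (G i x) - p x $ i * cnj (G i x) \<partial>?M)"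
        by (simp add: algebra_simps)
      also have "\<dots> = (\<integral>x. \<phi> x $ i * cnj (G i x) \<partial>?M) - (\<integral>x. p x $ i * cnj (G i x) \<partial>?M)"
        by (rule Bochner_Integration.integral_diff) (rule sqi_prod_int[OF \<phi>S sqi_cnj[OF GS]], rule sqi_prod_int[OF pS sqi_cnj[OF GS]])
      finally show "(\<integral>x. (\<phi> x $ i - p x $ i) * cnj (G i x) \<partial>?M) = (\<integral>x. \<phi> x $ i * cnj (G i x) \<partial>?M) - (\<integral>x. p x $ i * cnj (G i x) \<partial>?M)" .
    qed
    finally show ?thesis by (simp add: sum_subtractf)
  qed
  have drg: "Re (\<integral>x. d x * cnj (e x) \<partial>?M) + Re (\<integral>x. rg x \<partial>?M) = 0"
    unfolding dint rgi by simp
  have bI: "\<And>i. integrable ?M (\<lambda>x. (complex_of_real (b x $ i) * G i x) * cnj (e x))"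
    by (rule sqi_prod_int[OF Linf_sqi_mult[OF bi GS] sqi_cnj[OF eS]])
  have betaint: "(\<integral>x. beta x * cnj (e x) \<partial>?M) = (\<Sum>i\<in>UNIV. \<integral>x. (complex_of_real (b x $ i) * G i x) * cnj (e x) \<partial>?M)"
  proof -
    have "(\<integral>x. beta x * cnj (e x) \<partial>?M) = (\<integral>x. (\<Sum>i\<in>UNIV. (complex_of_real (b x $ i) * G i x) * cnj (e x)) \<partial>?M)"
      by (simp add: beta_def sum_distrib_right)
    also have "\<dots> = (\<Sum>i\<in>UNIV. \<integral>x. (complex_of_real (b x $ i) * G i x) * cnj (e x) \<partial>?M)"
      by (rule Bochner_Integration.integral_sum, rule bI)
    finally show ?thesis .
  qed
  have conjeq: "\<And>i. (\<integral>x. e x * cnj (complex_of_real (b x $ i) * G i x) \<partial>?M)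
       = cnj (\<integral>x. (complex_of_real (b x $ i) * G i x) * cnj (e x) \<partial>?M)"
  proof -
    fix i
    have 1: "(\<integral>x. cnj ((complex_of_real (b x $ i) * G i x) * cnj (e x)) \<partial>?M) = cnj (\<integral>x. (complex_of_real (b x $ i) * G i x) * cnj (e x) \<partial>?M)"
      by (rule Bochner_Integration.integral_cnj)
    have 2: "(\<integral>x. e x * cnj (complex_of_real (b x $ i) * G i x) \<partial>?M) = (\<integral>x. cnj ((complex_of_real (b x $ i) * G i x) * cnj (e x)) \<partial>?M)"
      by (rule Bochner_Integration.integral_cong) simp_all
    show "(\<integral>x. e x * cnj (complex_of_real (b x $ i) * G i x) \<partial>?M)
       = cnj (\<integral>x. (complex_of_real (b x $ i) * G i x) * cnj (e x) \<partial>?M)" unfolding 2 1 ..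
  qed
  have "2 * Re (\<integral>x. beta x * cnj (e x) \<partial>?M) = Re (- (\<integral>x. (complex_of_real (divb x) * e x) * cnj (e x) \<partial>?M))"
    unfolding bid[symmetric] betaint conjeq by (simp add: Re_sum sum.distrib)
  also have "\<dots> = - (\<integral>x. Re ((complex_of_real (divb x) * e x) * cnj (e x)) \<partial>?M)"
    using integral_Re_swap[OF sqi_prod_int[OF Linf_sqi_mult[OF divb_Linf eS] sqi_cnj[OF eS]]] by simp
  also have "\<dots> = wnorm2 \<Omega> (\<lambda>x. - divb x) (\<lambda>x. u x - ut x)"
    unfolding wnorm2_def e_def[symmetric]
    by (simp add: complex_norm_square[symmetric] mult.assoc flip: integral_minus)
  finally have "2 * Re (\<integral>x. beta x * cnj (e x) \<partial>?M) = wnorm2 \<Omega> (\<lambda>x. - divb x) (\<lambda>x. u x - ut x)" .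
  then show "wnorm2 \<Omega> (\<lambda>x. - divb x) (\<lambda>x. u x - ut x)
       \<le> 1/2 * (wnorm2 \<Omega> (\<lambda>x. inverse (c x))
                   (\<lambda>x. f x - complex_of_real (c x) * ut x - cdot (wgrad \<Omega> ut x) (cvec (b x))
                        + wdiv \<Omega> \<phi> x)
               + wnorm2M \<Omega> (\<lambda>x. matrix_inv (A x)) (\<lambda>x. \<phi> x - A x *v wgrad \<Omega> ut x))"
    using main drg by (rule fin_arith)
qed


end
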